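(* Let $\mathbb{F}$ be a finite field of odd cardinality $q\ge 5$ and let $n\ge 1$. Then every matrix $A\in\mathbb{M}_n(\mathbb{F})$ can be written as $A=D+M$ where $D\in\mathbb{M}_n(\mathbb{F})$ is diagonalizable over $\mathbb{F}$ and $M\in\mathbb{M}_n(\mathbb{F})$ satisfies $M^2=0$. In particular $D^q=D$, so $A$ is the sum of a $q$-potent matrix and a square-zero matrix.
   Context: A matrix $X\in\mathbb{M}_n(\mathbb{F})$ is diagonalizable if there is an invertible $U\in\mathbb{M}_n(\mathbb{F})$ with $U^{-1}XU$ diagonal. A matrix $Z$ is $q$-potent if $Z^q=Z$; a matrix $M$ is square-zero if $M^2=0$. *)

theory Defs
  imports "Jordan_Normal_Form.Matrix"
begin

definition diagonalizable_mat :: "nat \<Rightarrow> 'a :: field mat \<Rightarrow> bool" where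
  "diagonalizable_mat n X \<longleftrightarrow>
     (\<exists>U V. U \<in> carrier_mat n n \<and> V \<in> carrier_mat n n \<and>
            U * V = 1\<^sub>m n \<and> V * U = 1\<^sub>m n \<and> diagonal_mat (V * X * U))"

end

theory Submission
  imports Defs "Jordan_Normal_Form.Determinant"
begin

definition indep :: "'a::field mat \<Rightarrow> bool" where
  "indep W \<longleftrightarrow> (\<forall>c \<in> carrier_vec (dim_col W). W *\<^sub>v c = 0\<^sub>v (dim_row W) \<longrightarrow> c = 0\<^sub>v (dim_col W))"

lemma inv_of_indep:
  fixes X :: "'a::field mat"
  assumes X: "X \<in> carrier_mat n n" and ind: "indep X"
  shows "\<exists>Y. Y \<in> carrier_mat n n \<and> X * Y = 1\<^sub>m n \<and> Y * X = 1\<^sub>m n"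
proof -
  have "det X \<noteq> 0"
    using ind X unfolding indep_def det_0_iff_vec_prod_zero_field[OF X] by auto
  from det_non_zero_imp_unit[OF X this, of "()"]
  have "X \<in> Units (ring_mat TYPE('a) n ())" .
  then obtain Y where Y: "Y \<in> carrier_mat n n" "Y * X = 1\<^sub>m n" "X * Y = 1\<^sub>m n"
    unfolding Units_def ring_mat_def by auto
  thus ?thesis by auto
qed

lemma indep_le:
  fixes W :: "'a::field mat"
  assumes W: "W \<in> carrier_mat n k" and ind: "indep W"
  shows "k \<le> n"
proof (rule ccontr)
  assume "\<not> k \<le> n"
  hence kn: "n < k" by auto
  define W' where "W' = mat k k (\<lambda>(i,j). if i < n then W $$ (i,j) else 0)"
  have W': "W' \<in> carrier_mat k k" unfolding W'_def by auto
  have rows: "row W' i = row W i" if "i < n" for i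
    using that kn W unfolding W'_def by (intro eq_vecI, auto)
  have "det W' \<noteq> 0"
  proof
    assume "det W' = 0"
    then obtain c where c: "c \<in> carrier_vec k" "c \<noteq> 0\<^sub>v k" "W' *\<^sub>v c = 0\<^sub>v k"
      unfolding det_0_iff_vec_prod_zero_field[OF W'] by auto
    have "W *\<^sub>v c = 0\<^sub>v n"
    proof (intro eq_vecI)
      fix i assume "i < dim_vec (0\<^sub>v n :: 'a vec)"
      hence i: "i < n" by auto
      have "(W' *\<^sub>v c) $ i = 0" using c i kn by auto
      hence "row W' i \<bullet> c = 0" using i kn W' by auto
      thus "(W *\<^sub>v c) $ i = 0\<^sub>v n $ i" using rows[OF i] i W by auto
    qed (insert W, auto)
    with ind c W show False unfolding indep_def by auto
  qed
  moreover have "det W' = 0"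
  proof -
    have WT: "transpose_mat W' \<in> carrier_mat k k" using W' by auto
    have "transpose_mat W' *\<^sub>v unit_vec k (k - 1) = 0\<^sub>v k"
    proof (intro eq_vecI)
      fix i assume "i < dim_vec (0\<^sub>v k :: 'a vec)"
      hence i: "i < k" by auto
      have "(transpose_mat W' *\<^sub>v unit_vec k (k - 1)) $ i = row (transpose_mat W') i \<bullet> unit_vec k (k - 1)"
        using i W' by auto
      also have "\<dots> = (transpose_mat W') $$ (i, k - 1)"
        using i kn W' by (subst scalar_prod_right_unit, auto)
      also have "\<dots> = 0" using i kn unfolding W'_def by auto
      finally show "(transpose_mat W' *\<^sub>v unit_vec k (k - 1)) $ i = 0\<^sub>v k $ i" using i by auto
    qed (insert W', auto)
    moreover have "unit_vec k (k - 1) \<noteq> (0\<^sub>v k :: 'a vec)"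
    proof
      assume "unit_vec k (k - 1) = (0\<^sub>v k :: 'a vec)"
      hence "unit_vec k (k - 1) $ (k - 1) = (0\<^sub>v k :: 'a vec) $ (k - 1)" by simp
      thus False using kn by auto
    qed
    ultimately have "det (transpose_mat W') = 0"
      unfolding det_0_iff_vec_prod_zero_field[OF WT] by (intro exI[of _ "unit_vec k (k - 1)"], auto)
    thus ?thesis using det_transpose[OF W'] by auto
  qed
  ultimately show False by auto
qed

lemma span_right_inverse:
  fixes W :: "'a::field mat"
  assumes W: "W \<in> carrier_mat n k"
    and sp: "\<And>j. j < n \<Longrightarrow> \<exists>c \<in> carrier_vec k. unit_vec n j = W *\<^sub>v c"
  shows "\<exists>X. X \<in> carrier_mat k n \<and> W * X = 1\<^sub>m n"
proof -
  have "\<forall>j. \<exists>c. j < n \<longrightarrow> c \<in> carrier_vec k \<and> unit_vec n j = W *\<^sub>v c"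
    using sp by blast
  then obtain cf where cf: "\<And>j. j < n \<Longrightarrow> cf j \<in> carrier_vec k \<and> unit_vec n j = W *\<^sub>v cf j"
    by metis
  define X where "X = mat k n (\<lambda>(i,j). cf j $ i)"
  have X: "X \<in> carrier_mat k n" unfolding X_def by auto
  have colX: "col X j = cf j" if "j < n" for j
    using cf[OF that] that unfolding X_def by (intro eq_vecI, auto)
  have "W * X = 1\<^sub>m n"
  proof (rule mat_col_eqI)
    fix j assume "j < dim_col (1\<^sub>m n :: 'a mat)"
    hence j: "j < n" by auto
    have "col (W * X) j = W *\<^sub>v col X j" using W X j by auto
    also have "\<dots> = unit_vec n j" using cf[OF j] colX[OF j] by auto
    finally show "col (W * X) j = col (1\<^sub>m n) j" using j by auto
  qed (insert W X, auto)
  thus ?thesis using X by auto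
qed

lemma right_inverse_indep:
  fixes W :: "'a::field mat"
  assumes W: "W \<in> carrier_mat n k" and X: "X \<in> carrier_mat k n" and WX: "W * X = 1\<^sub>m n"
  shows "indep X"
  unfolding indep_def
proof (intro ballI impI)
  fix c assume c: "c \<in> carrier_vec (dim_col X)" and "X *\<^sub>v c = 0\<^sub>v (dim_row X)"
  hence c: "c \<in> carrier_vec n" and Xc: "X *\<^sub>v c = 0\<^sub>v k" using X by auto
  have "c = (W * X) *\<^sub>v c" using WX c by auto
  also have "\<dots> = W *\<^sub>v (X *\<^sub>v c)" using W X c by (rule assoc_mult_mat_vec)
  also have "\<dots> = 0\<^sub>v n" using Xc W by auto
  finally show "c = 0\<^sub>v (dim_col X)" using X by auto
qed

lemma span_ge:
  fixes W :: "'a::field mat"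
  assumes W: "W \<in> carrier_mat n k"
    and sp: "\<And>j. j < n \<Longrightarrow> \<exists>c \<in> carrier_vec k. unit_vec n j = W *\<^sub>v c"
  shows "n \<le> k"
proof -
  obtain X where X: "X \<in> carrier_mat k n" "W * X = 1\<^sub>m n" using span_right_inverse[OF W sp] by blast
  from right_inverse_indep[OF W X] indep_le[OF X(1)] show ?thesis by auto
qed

definition in_span :: "'a::field mat \<Rightarrow> 'a vec \<Rightarrow> bool" where
  "in_span W x \<longleftrightarrow> (\<exists>c \<in> carrier_vec (dim_col W). x = W *\<^sub>v c)"

lemma finite_carrier_vec: "finite (carrier_vec n :: 'a::finite vec set)"
proof -
  have "carrier_vec n \<subseteq> vec_of_list ` {xs :: 'a list. set xs \<subseteq> UNIV \<and> length xs = n}"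
  proof
    fix v :: "'a vec" assume "v \<in> carrier_vec n"
    thus "v \<in> vec_of_list ` {xs. set xs \<subseteq> UNIV \<and> length xs = n}"
      by (intro image_eqI[of _ _ "list_of_vec v"], auto simp: vec_list)
  qed
  moreover have "finite {xs :: 'a list. set xs \<subseteq> UNIV \<and> length xs = n}"
    by (rule finite_lists_length_eq, auto)
  ultimately show ?thesis by (meson finite_imageI finite_subset)
qed

lemma mat_of_cols_snoc_mult:
  fixes xs :: "'a::field vec list"
  assumes xs: "set xs \<subseteq> carrier_vec n" and x: "x \<in> carrier_vec n"
    and c: "c \<in> carrier_vec (Suc (length xs))"
  shows "mat_of_cols n (xs @ [x]) *\<^sub>v c
       = mat_of_cols n xs *\<^sub>v vec (length xs) (\<lambda>i. c $ i) + c $ (length xs) \<cdot>\<^sub>v x"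
proof (rule eq_vecI)
  fix i assume "i < dim_vec (mat_of_cols n xs *\<^sub>v vec (length xs) (\<lambda>i. c $ i) + c $ (length xs) \<cdot>\<^sub>v x)"
  hence i: "i < n" using x by auto
  let ?m = "length xs"
  have "(mat_of_cols n (xs @ [x]) *\<^sub>v c) $ i = (\<Sum>j\<in>{0..<Suc ?m}. (xs @ [x]) ! j $ i * c $ j)"
    using i c by (auto simp: scalar_prod_def mat_of_cols_def)
  also have "\<dots> = (\<Sum>j\<in>{0..<?m}. (xs @ [x]) ! j $ i * c $ j) + x $ i * c $ ?m"
    by (simp add: nth_append)
  also have "(\<Sum>j\<in>{0..<?m}. (xs @ [x]) ! j $ i * c $ j) = (\<Sum>j\<in>{0..<?m}. xs ! j $ i * c $ j)"
    by (rule sum.cong, auto simp: nth_append)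
  also have "\<dots> = (mat_of_cols n xs *\<^sub>v vec (length xs) (\<lambda>i. c $ i)) $ i"
    using i by (auto simp: scalar_prod_def mat_of_cols_def intro: sum.cong)
  finally show "(mat_of_cols n (xs @ [x]) *\<^sub>v c) $ i =
    (mat_of_cols n xs *\<^sub>v vec (length xs) (\<lambda>i. c $ i) + c $ (length xs) \<cdot>\<^sub>v x) $ i"
    using i x by (auto simp: mult.commute)
qed (insert x, auto)

lemma in_span_col:
  fixes xs :: "'a::field vec list"
  assumes xs: "set xs \<subseteq> carrier_vec n" and j: "j < length xs"
  shows "in_span (mat_of_cols n xs) (xs ! j)"
  unfolding in_span_def
proof (intro bexI[of _ "unit_vec (length xs) j"])
  have "mat_of_cols n xs *\<^sub>v unit_vec (length xs) j = col (mat_of_cols n xs) j"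
    using j by (intro eq_vecI, auto)
  also have "\<dots> = xs ! j"
  proof -
    have xj: "xs ! j \<in> carrier_vec n" using xs nth_mem[OF j] by auto
    show ?thesis using j xj by (intro eq_vecI, auto simp: mat_of_cols_def)
  qed
  finally show "xs ! j = mat_of_cols n xs *\<^sub>v unit_vec (length xs) j" by simp
qed auto

lemma in_span_zero: "in_span (W :: 'a::field mat) (0\<^sub>v (dim_row W))"
  unfolding in_span_def by (intro bexI[of _ "0\<^sub>v (dim_col W)"], auto)

lemma in_span_add:
  fixes W :: "'a::field mat"
  assumes "in_span W x" "in_span W y"
  shows "in_span W (x + y)"
proof -
  from assms obtain c d where c: "c \<in> carrier_vec (dim_col W)" "x = W *\<^sub>v c"
    and d: "d \<in> carrier_vec (dim_col W)" "y = W *\<^sub>v d" unfolding in_span_def by auto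
  have "W *\<^sub>v (c + d) = W *\<^sub>v c + W *\<^sub>v d"
    using c d by (intro mult_add_distrib_mat_vec[of _ "dim_row W" "dim_col W"], auto)
  thus ?thesis unfolding in_span_def using c d by (intro bexI[of _ "c + d"], auto)
qed

lemma in_span_smult:
  fixes W :: "'a::field mat"
  assumes "in_span W x"
  shows "in_span W (a \<cdot>\<^sub>v x)"
proof -
  from assms obtain c where c: "c \<in> carrier_vec (dim_col W)" "x = W *\<^sub>v c"
    unfolding in_span_def by auto
  have "W *\<^sub>v (a \<cdot>\<^sub>v c) = a \<cdot>\<^sub>v (W *\<^sub>v c)"
    using c by (intro mult_mat_vec[of _ "dim_row W" "dim_col W"], auto)
  thus ?thesis unfolding in_span_def using c by (intro bexI[of _ "a \<cdot>\<^sub>v c"], auto)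
qed

lemma in_span_prefix:
  fixes xs :: "'a::field vec list"
  assumes xs: "set xs \<subseteq> carrier_vec n" and ys: "set ys \<subseteq> carrier_vec n"
    and sp: "in_span (mat_of_cols n xs) y"
  shows "in_span (mat_of_cols n (xs @ ys)) y"
proof -
  from sp obtain c where c: "c \<in> carrier_vec (length xs)" "y = mat_of_cols n xs *\<^sub>v c"
    unfolding in_span_def by auto
  define d where "d = vec (length xs + length ys) (\<lambda>i. if i < length xs then c $ i else 0)"
  have "mat_of_cols n (xs @ ys) *\<^sub>v d = mat_of_cols n xs *\<^sub>v c"
  proof (rule eq_vecI)
    fix i assume "i < dim_vec (mat_of_cols n xs *\<^sub>v c)"
    hence i: "i < n" by auto
    have "(mat_of_cols n (xs @ ys) *\<^sub>v d) $ i = (\<Sum>j\<in>{0..<length xs + length ys}. (xs @ ys) ! j $ i * d $ j)"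
      using i by (auto simp: scalar_prod_def mat_of_cols_def d_def)
    also have "\<dots> = (\<Sum>j\<in>{0..<length xs}. (xs @ ys) ! j $ i * d $ j)"
      by (rule sum.mono_neutral_right, auto simp: d_def)
    also have "\<dots> = (\<Sum>j\<in>{0..<length xs}. xs ! j $ i * c $ j)"
      by (rule sum.cong, auto simp: d_def nth_append)
    also have "\<dots> = (mat_of_cols n xs *\<^sub>v c) $ i"
      using i c by (auto simp: scalar_prod_def mat_of_cols_def intro: sum.cong)
    finally show "(mat_of_cols n (xs @ ys) *\<^sub>v d) $ i = (mat_of_cols n xs *\<^sub>v c) $ i" .
  qed auto
  thus ?thesis unfolding in_span_def using c by (intro bexI[of _ d], auto simp: d_def)
qed

lemma indep_snoc:
  fixes xs :: "'a::field vec list"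
  assumes xs: "set xs \<subseteq> carrier_vec n" and x: "x \<in> carrier_vec n"
    and ind: "indep (mat_of_cols n xs)" and nsp: "\<not> in_span (mat_of_cols n xs) x"
  shows "indep (mat_of_cols n (xs @ [x]))"
  unfolding indep_def
proof (intro ballI impI)
  fix c assume c: "c \<in> carrier_vec (dim_col (mat_of_cols n (xs @ [x])))"
    and eq: "mat_of_cols n (xs @ [x]) *\<^sub>v c = 0\<^sub>v (dim_row (mat_of_cols n (xs @ [x])))"
  let ?m = "length xs"
  let ?c' = "vec ?m (\<lambda>i. c $ i)"
  have c: "c \<in> carrier_vec (Suc ?m)" using c by auto
  have eq: "mat_of_cols n xs *\<^sub>v ?c' + c $ ?m \<cdot>\<^sub>v x = 0\<^sub>v n"
    using eq mat_of_cols_snoc_mult[OF xs x c] by auto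
  have cm: "c $ ?m = 0"
  proof (rule ccontr)
    assume nz: "c $ ?m \<noteq> 0"
    have "x = (- 1 / c $ ?m) \<cdot>\<^sub>v (mat_of_cols n xs *\<^sub>v ?c')"
    proof (rule eq_vecI)
      fix i assume "i < dim_vec ((- 1 / c $ ?m) \<cdot>\<^sub>v (mat_of_cols n xs *\<^sub>v ?c'))"
      hence i: "i < n" by auto
      have "(mat_of_cols n xs *\<^sub>v ?c') $ i + c $ ?m * x $ i = 0"
        using arg_cong[OF eq, of "\<lambda>v. v $ i"] i x by auto
      thus "x $ i = ((- 1 / c $ ?m) \<cdot>\<^sub>v (mat_of_cols n xs *\<^sub>v ?c')) $ i"
        using i nz by (auto simp: field_simps eq_neg_iff_add_eq_0)
    qed (insert x, auto)
    hence "in_span (mat_of_cols n xs) x"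
      by (metis in_span_smult[of "mat_of_cols n xs" _ "- 1 / c $ ?m"] in_span_def mat_of_cols_carrier(3)
          vec_carrier)
    with nsp show False by auto
  qed
  have z: "c $ ?m \<cdot>\<^sub>v x = 0\<^sub>v n" using cm x by auto
  have "mat_of_cols n xs *\<^sub>v ?c' \<in> carrier_vec n" unfolding carrier_vec_def by simp
  hence "mat_of_cols n xs *\<^sub>v ?c' = 0\<^sub>v n" using eq unfolding z by auto
  hence "?c' = 0\<^sub>v ?m" using ind unfolding indep_def by auto
  hence "c $ i = 0" if "i < ?m" for i
  proof -
    have "?c' $ i = 0\<^sub>v ?m $ i" using \<open>?c' = 0\<^sub>v ?m\<close> by simp
    thus ?thesis using that by simp
  qed
  with cm have "c $ i = 0" if "i < Suc ?m" for i using that less_Suc_eq by auto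
  thus "c = 0\<^sub>v (dim_col (mat_of_cols n (xs @ [x])))" using c by (intro eq_vecI, auto)
qed

lemma greedy_basis:
  fixes ws :: "'a::field vec list"
  assumes "set bs0 \<subseteq> carrier_vec n" "indep (mat_of_cols n bs0)" "set ws \<subseteq> carrier_vec n"
  shows "\<exists>bs. set bs \<subseteq> set ws \<and> indep (mat_of_cols n (bs0 @ bs)) \<and>
     (\<forall>w \<in> set ws \<union> set bs0. in_span (mat_of_cols n (bs0 @ bs)) w)"
  using assms
proof (induction ws arbitrary: bs0)
  case Nil
  have "in_span (mat_of_cols n bs0) w" if "w \<in> set bs0" for w
    using that in_span_col[OF Nil(1)] by (metis in_set_conv_nth)
  thus ?case using Nil by (intro exI[of _ "[]"], auto)
next
  case (Cons w ws)
  show ?case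
  proof (cases "in_span (mat_of_cols n bs0) w")
    case True
    from Cons.IH[OF Cons.prems(1,2)] Cons.prems(3) obtain bs where
      bs: "set bs \<subseteq> set ws" "indep (mat_of_cols n (bs0 @ bs))"
      "\<forall>w \<in> set ws \<union> set bs0. in_span (mat_of_cols n (bs0 @ bs)) w" by auto
    have "in_span (mat_of_cols n (bs0 @ bs)) w"
      using in_span_prefix[OF Cons.prems(1) _ True, of bs] bs(1) Cons.prems(3) by auto
    thus ?thesis using bs by (intro exI[of _ bs], auto)
  next
    case False
    have w: "w \<in> carrier_vec n" using Cons.prems(3) by auto
    have ind: "indep (mat_of_cols n (bs0 @ [w]))" by (rule indep_snoc[OF Cons.prems(1) w Cons.prems(2) False])
    from Cons.IH[OF _ ind] Cons.prems w obtain bs where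
      bs: "set bs \<subseteq> set ws" "indep (mat_of_cols n ((bs0 @ [w]) @ bs))"
      "\<forall>x \<in> set ws \<union> set (bs0 @ [w]). in_span (mat_of_cols n ((bs0 @ [w]) @ bs)) x" by auto
    thus ?thesis by (intro exI[of _ "w # bs"], auto)
  qed
qed

definition kv :: "'a::field mat \<Rightarrow> 'a vec \<Rightarrow> nat \<Rightarrow> 'a vec" where
  "kv A v j = ((\<lambda>x. A *\<^sub>v x) ^^ j) v"

definition kmat :: "nat \<Rightarrow> 'a::field mat \<Rightarrow> 'a vec \<Rightarrow> nat \<Rightarrow> 'a mat" where
  "kmat n A v d = mat_of_cols n (map (kv A v) [0..<d])"

definition kdim :: "nat \<Rightarrow> 'a::field mat \<Rightarrow> 'a vec \<Rightarrow> nat" where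
  "kdim n A v = (LEAST d. in_span (kmat n A v d) (kv A v d))"

definition compan :: "nat \<Rightarrow> 'a::field vec \<Rightarrow> 'a mat" where
  "compan k cs = mat k k (\<lambda>(i,j). if j = k - 1 then cs $ i else if i = j + 1 then 1 else 0)"

lemma kv_0[simp]: "kv A v 0 = v" unfolding kv_def by simp
lemma kv_Suc: "kv A v (Suc j) = A *\<^sub>v kv A v j" unfolding kv_def by simp

lemma kv_carrier[simp]: "A \<in> carrier_mat n n \<Longrightarrow> v \<in> carrier_vec n \<Longrightarrow> kv A v j \<in> carrier_vec n"
  by (induction j, auto simp: kv_Suc)

lemma kmat_carrier[simp]: "kmat n A v d \<in> carrier_mat n d"
  unfolding kmat_def by auto

lemma kmat_dims[simp]: "dim_row (kmat n A v d) = n" "dim_col (kmat n A v d) = d"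
  unfolding kmat_def by auto

lemma kmat_Suc: "kmat n A v (Suc d) = mat_of_cols n (map (kv A v) [0..<d] @ [kv A v d])"
  unfolding kmat_def by simp

lemma mult_unit_vec_col:
  fixes M :: "'a::field mat"
  assumes "M \<in> carrier_mat n k" "j < k"
  shows "M *\<^sub>v unit_vec k j = col M j"
  using assms by (intro eq_vecI, auto)

lemma col_kmat: assumes "j < d" "A \<in> carrier_mat n n" "v \<in> carrier_vec n"
  shows "col (kmat n A v d) j = kv A v j"
  using kv_carrier[OF assms(2,3), of j] assms(1) unfolding kmat_def by (intro eq_vecI, auto simp: mat_of_cols_def)

lemma mat_of_cols_append_zero:
  fixes xs :: "'a::field vec list"
  assumes c: "c \<in> carrier_vec (length xs)"
  shows "mat_of_cols n (xs @ ys) *\<^sub>v vec (length xs + length ys) (\<lambda>i. if i < length xs then c $ i else 0)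
    = mat_of_cols n xs *\<^sub>v c"
proof (rule eq_vecI)
  let ?d = "vec (length xs + length ys) (\<lambda>i. if i < length xs then c $ i else 0)"
  fix i assume "i < dim_vec (mat_of_cols n xs *\<^sub>v c)"
  hence i: "i < n" by auto
  have "(mat_of_cols n (xs @ ys) *\<^sub>v ?d) $ i = (\<Sum>j\<in>{0..<length xs + length ys}. (xs @ ys) ! j $ i * ?d $ j)"
    using i by (auto simp: scalar_prod_def mat_of_cols_def)
  also have "\<dots> = (\<Sum>j\<in>{0..<length xs}. (xs @ ys) ! j $ i * ?d $ j)"
    by (rule sum.mono_neutral_right, auto)
  also have "\<dots> = (\<Sum>j\<in>{0..<length xs}. xs ! j $ i * c $ j)"
    by (rule sum.cong, auto simp: nth_append)
  also have "\<dots> = (mat_of_cols n xs *\<^sub>v c) $ i"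
    using i c by (auto simp: scalar_prod_def mat_of_cols_def intro: sum.cong)
  finally show "(mat_of_cols n (xs @ ys) *\<^sub>v ?d) $ i = (mat_of_cols n xs *\<^sub>v c) $ i" .
qed auto

lemma indep_prefix:
  fixes xs :: "'a::field vec list"
  assumes ind: "indep (mat_of_cols n (xs @ ys))"
  shows "indep (mat_of_cols n xs)"
  unfolding indep_def
proof (intro ballI impI)
  fix c assume c: "c \<in> carrier_vec (dim_col (mat_of_cols n xs))"
    and eq: "mat_of_cols n xs *\<^sub>v c = 0\<^sub>v (dim_row (mat_of_cols n xs))"
  let ?d = "vec (length xs + length ys) (\<lambda>i. if i < length xs then c $ i else 0)"
  have c: "c \<in> carrier_vec (length xs)" using c by auto
  have "mat_of_cols n (xs @ ys) *\<^sub>v ?d = 0\<^sub>v n" using mat_of_cols_append_zero[OF c, of n ys] eq by auto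
  hence "?d = 0\<^sub>v (length xs + length ys)" using ind unfolding indep_def by auto
  hence "c $ i = 0" if "i < length xs" for i
  proof -
    have "?d $ i = 0\<^sub>v (length xs + length ys) $ i" using \<open>?d = _\<close> by simp
    thus ?thesis using that by simp
  qed
  thus "c = 0\<^sub>v (dim_col (mat_of_cols n xs))" using c by (intro eq_vecI, auto)
qed

lemma span_snoc_not_indep:
  fixes xs :: "'a::field vec list"
  assumes xs: "set xs \<subseteq> carrier_vec n" and x: "x \<in> carrier_vec n"
    and sp: "in_span (mat_of_cols n xs) x"
  shows "\<not> indep (mat_of_cols n (xs @ [x]))"
proof
  assume ind: "indep (mat_of_cols n (xs @ [x]))"
  from sp obtain c where c: "c \<in> carrier_vec (length xs)" "x = mat_of_cols n xs *\<^sub>v c"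
    unfolding in_span_def by auto
  let ?d = "vec (Suc (length xs)) (\<lambda>i. if i < length xs then c $ i else - 1)"
  have d: "?d \<in> carrier_vec (Suc (length xs))" by auto
  have "vec (length xs) (\<lambda>i. ?d $ i) = c" using c by (intro eq_vecI, auto)
  hence "mat_of_cols n (xs @ [x]) *\<^sub>v ?d = x + (- 1) \<cdot>\<^sub>v x"
    using mat_of_cols_snoc_mult[OF xs x d] c by auto
  also have "\<dots> = 0\<^sub>v n" using x by (intro eq_vecI, auto)
  finally have "?d = 0\<^sub>v (Suc (length xs))" using ind d unfolding indep_def by auto
  hence "?d $ length xs = 0" by (metis index_zero_vec(1) lessI)
  thus False by simp
qed

lemma kmat_indep_if:
  fixes A :: "'a::field mat"
  assumes A: "A \<in> carrier_mat n n" and v: "v \<in> carrier_vec n"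
    and h: "\<And>j. j < d \<Longrightarrow> \<not> in_span (kmat n A v j) (kv A v j)"
  shows "indep (kmat n A v d)"
  using h
proof (induction d)
  case 0
  show ?case unfolding indep_def kmat_def by (auto intro!: eq_vecI)
next
  case (Suc d)
  have ind: "indep (kmat n A v d)" using Suc by auto
  have ns: "\<not> in_span (kmat n A v d) (kv A v d)" using Suc.prems by auto
  show ?case unfolding kmat_Suc
    by (rule indep_snoc, insert A v ind ns, auto simp: kmat_def)
qed

lemma kdim_props:
  fixes A :: "'a::field mat"
  assumes A: "A \<in> carrier_mat n n" and v: "v \<in> carrier_vec n"
  shows "in_span (kmat n A v (kdim n A v)) (kv A v (kdim n A v))"
    "kdim n A v \<le> n"
    "indep (kmat n A v (kdim n A v))"
proof -
  have "\<not> indep (kmat n A v (Suc n))"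
    using indep_le[OF kmat_carrier[of n A v "Suc n"]] by auto
  then obtain j where j: "j < Suc n" "in_span (kmat n A v j) (kv A v j)"
    using kmat_indep_if[OF A v] by blast
  show "in_span (kmat n A v (kdim n A v)) (kv A v (kdim n A v))"
    unfolding kdim_def by (rule LeastI, rule j(2))
  have "kdim n A v \<le> j" unfolding kdim_def by (rule Least_le, rule j(2))
  thus "kdim n A v \<le> n" using j by auto
  show "indep (kmat n A v (kdim n A v))"
    by (rule kmat_indep_if[OF A v], unfold kdim_def, rule not_less_Least)
qed

lemma kdim_pos:
  fixes A :: "'a::field mat"
  assumes A: "A \<in> carrier_mat n n" and v: "v \<in> carrier_vec n" and nz: "v \<noteq> 0\<^sub>v n"
  shows "1 \<le> kdim n A v"
proof (rule ccontr)
  assume "\<not> 1 \<le> kdim n A v"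
  hence "kdim n A v = 0" by auto
  with kdim_props(1)[OF A v] have "in_span (kmat n A v 0) v" by auto
  then obtain c where "c \<in> carrier_vec 0" "v = kmat n A v 0 *\<^sub>v c"
    unfolding in_span_def using kmat_carrier[of n A v 0] by auto
  hence "v = 0\<^sub>v n" by (intro eq_vecI, auto simp: kmat_def scalar_prod_def)
  with nz show False by auto
qed

lemma kdim_ge:
  fixes A :: "'a::field mat"
  assumes A: "A \<in> carrier_mat n n" and v: "v \<in> carrier_vec n"
    and ind: "indep (kmat n A v k)"
  shows "k \<le> kdim n A v"
proof (rule ccontr)
  let ?d = "kdim n A v"
  assume "\<not> k \<le> ?d"
  hence dk: "Suc ?d \<le> k" by auto
  have "map (kv A v) [0..<k] = (map (kv A v) [0..<?d] @ [kv A v ?d]) @ map (kv A v) [Suc ?d..<k]"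
  proof -
    obtain r where r: "k = Suc ?d + r" using dk le_Suc_ex by blast
    have "[0..<k] = [0..<Suc ?d] @ [Suc ?d..<k]" unfolding r by (rule upt_add_eq_append, simp)
    thus ?thesis by simp
  qed
  hence "indep (mat_of_cols n (map (kv A v) [0..<?d] @ [kv A v ?d]))"
    using ind indep_prefix unfolding kmat_def by metis
  moreover have "\<not> indep (mat_of_cols n (map (kv A v) [0..<?d] @ [kv A v ?d]))"
    by (rule span_snoc_not_indep, insert A v kdim_props(1)[OF A v], auto simp: kmat_def)
  ultimately show False by auto
qed

lemma kmat_comp:
  fixes A :: "'a::field mat"
  assumes A: "A \<in> carrier_mat n n" and v: "v \<in> carrier_vec n"
    and cs: "cs \<in> carrier_vec k" and k: "1 \<le> k"
    and last: "kv A v k = kmat n A v k *\<^sub>v cs"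
  shows "A * kmat n A v k = kmat n A v k * compan k cs"
proof (rule mat_col_eqI)
  fix j assume "j < dim_col (kmat n A v k * compan k cs)"
  hence j: "j < k" by (auto simp: compan_def)
  have C: "compan k cs \<in> carrier_mat k k" unfolding compan_def by auto
  have "col (A * kmat n A v k) j = A *\<^sub>v kv A v j"
    using col_mult2[OF A kmat_carrier j] col_kmat[OF j A v] by simp
  also have "\<dots> = kv A v (Suc j)" by (simp add: kv_Suc)
  also have "\<dots> = kmat n A v k *\<^sub>v col (compan k cs) j"
  proof (cases "j = k - 1")
    case True
    have "col (compan k cs) j = cs" using True cs j unfolding compan_def by (intro eq_vecI, auto)
    thus ?thesis using True last k by auto
  next
    case False
    hence j1: "j + 1 < k" using j by auto
    have "col (compan k cs) j = unit_vec k (j + 1)" using False j j1 unfolding compan_def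
      by (intro eq_vecI, auto simp: unit_vec_def)
    hence "kmat n A v k *\<^sub>v col (compan k cs) j = col (kmat n A v k) (j + 1)"
      using mult_unit_vec_col[OF kmat_carrier j1] by simp
    thus ?thesis using col_kmat[OF j1 A v] by simp
  qed
  also have "\<dots> = col (kmat n A v k * compan k cs) j"
    using col_mult2[OF kmat_carrier C j] by simp
  finally show "col (A * kmat n A v k) j = col (kmat n A v k * compan k cs) j" .
qed (insert A, auto simp: compan_def)

lemma mult_mat_vec_0:
  fixes A :: "'a::field mat"
  assumes A: "A \<in> carrier_mat nr n"
  shows "A *\<^sub>v 0\<^sub>v n = 0\<^sub>v nr"
proof (rule eq_vecI)
  fix i assume "i < dim_vec (0\<^sub>v nr :: 'a vec)"
  hence i: "i < nr" by simp
  have r: "row A i \<in> carrier_vec n" using A by (intro carrier_vecI, simp)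
  show "(A *\<^sub>v 0\<^sub>v n) $ i = 0\<^sub>v nr $ i" using i A scalar_prod_right_zero[OF r] by simp
qed (insert A, simp)

lemma kv_commute:
  fixes A E :: "'a::field mat"
  assumes A: "A \<in> carrier_mat n n" and E: "E \<in> carrier_mat n n" and EA: "E * A = A * E"
    and v: "v \<in> carrier_vec n" and Ev: "E *\<^sub>v v = v"
  shows "E *\<^sub>v kv A v j = kv A v j"
proof (induction j)
  case (Suc j)
  have "E *\<^sub>v kv A v (Suc j) = E *\<^sub>v (A *\<^sub>v kv A v j)" by (simp add: kv_Suc)
  also have "\<dots> = (E * A) *\<^sub>v kv A v j" using A E v by (simp add: assoc_mult_mat_vec)
  also have "\<dots> = A *\<^sub>v (E *\<^sub>v kv A v j)" unfolding EA using A E v by (simp add: assoc_mult_mat_vec)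
  also have "\<dots> = kv A v (Suc j)" using Suc by (simp add: kv_Suc)
  finally show ?case .
qed (simp add: Ev)

lemma kv_transpose_scalar:
  fixes A :: "'a::field mat"
  assumes A: "A \<in> carrier_mat n n" and v: "v \<in> carrier_vec n" and f: "f \<in> carrier_vec n"
  shows "kv (transpose_mat A) f i \<bullet> kv A v j = f \<bullet> kv A v (i + j)"
proof (induction i arbitrary: j)
  case (Suc i)
  have AT: "transpose_mat A \<in> carrier_mat n n" using A by simp
  have "kv (transpose_mat A) f (Suc i) \<bullet> kv A v j = (transpose_mat A *\<^sub>v kv (transpose_mat A) f i) \<bullet> kv A v j"
    by (simp add: kv_Suc)
  also have "\<dots> = kv (transpose_mat A) f i \<bullet> (A *\<^sub>v kv A v j)"
    by (rule transpose_vec_mult_scalar[OF A], insert A v f AT, auto)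
  also have "\<dots> = f \<bullet> kv A v (Suc (i + j))" using Suc[of "Suc j"] by (simp add: kv_Suc)
  finally show ?case by simp
qed simp

lemma transpose_idem:
  fixes E :: "'a::field mat"
  assumes E: "E \<in> carrier_mat n n" and EE: "E * E = E"
  shows "transpose_mat E * transpose_mat E = transpose_mat E"
  using transpose_mult[OF E E] EE by simp

lemma transpose_comm:
  fixes A E :: "'a::field mat"
  assumes A: "A \<in> carrier_mat n n" and E: "E \<in> carrier_mat n n" and EA: "E * A = A * E"
  shows "transpose_mat E * transpose_mat A = transpose_mat A * transpose_mat E"
  using transpose_mult[OF E A] transpose_mult[OF A E] EA by simp

lemma hankel_kernel:
  fixes Hk :: "'a::field mat"
  assumes Hk: "Hk = mat k k (\<lambda>(i,j). h (i + j))"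
    and h: "\<And>e. e < k \<Longrightarrow> h e = (if e = k - 1 then 1 else 0)"
    and c: "c \<in> carrier_vec k" and Hc: "Hk *\<^sub>v c = 0\<^sub>v k"
  shows "c = 0\<^sub>v k"
proof -
  have main: "c $ (k - 1 - t) = 0" if "t < k" for t
    using that
  proof (induction t rule: less_induct)
    case (less t)
    have "(\<Sum>j\<in>{0..<k}. h (t + j) * c $ j) = (\<Sum>j\<in>{0..<k}. if j = k - 1 - t then c $ j else 0)"
    proof (rule sum.cong)
      fix j assume "j \<in> {0..<k}"
      hence j: "j < k" by auto
      show "h (t + j) * c $ j = (if j = k - 1 - t then c $ j else 0)"
      proof (cases "j > k - 1 - t")
        case True
        have s: "k - 1 - j < t" using True j by arith
        have s2: "k - 1 - (k - 1 - j) = j" using j by arith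
        have "c $ j = 0" using less.IH[OF s] s less.prems unfolding s2 by simp
        thus ?thesis using True by auto
      next
        case False
        thus ?thesis using h[of "t + j"] less.prems j by auto
      qed
    qed simp
    also have "\<dots> = c $ (k - 1 - t)" using less.prems by (simp add: sum.delta)
    finally have "c $ (k - 1 - t) = (\<Sum>j\<in>{0..<k}. h (t + j) * c $ j)" by simp
    also have "\<dots> = (Hk *\<^sub>v c) $ t" using less.prems c unfolding Hk
      by (auto simp: scalar_prod_def intro!: sum.cong)
    also have "\<dots> = 0" using Hc less.prems by simp
    finally show ?case .
  qed
  show ?thesis
  proof (rule eq_vecI)
    fix i assume "i < dim_vec (0\<^sub>v k :: 'a vec)"
    hence i: "i < k" by simp
    have "k - 1 - (k - 1 - i) = i" using i by auto
    thus "c $ i = 0\<^sub>v k $ i" using main[of "k - 1 - i"] i by auto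
  qed (insert c, auto)
qed

lemma step_frame:
  fixes A E :: "'a::field mat"
  assumes A: "A \<in> carrier_mat n n" and E: "E \<in> carrier_mat n n" and EE: "E * E = E"
    and EA: "E * A = A * E"
    and v: "v \<in> carrier_vec n" and Ev: "E *\<^sub>v v = v" and kdef: "k = kdim n A v" and k1: "1 \<le> k"
    and kmax: "\<And>f. f \<in> carrier_vec n \<Longrightarrow> transpose_mat E *\<^sub>v f = f \<Longrightarrow> kdim n (transpose_mat A) f \<le> k"
  shows "\<exists>K G cs. K \<in> carrier_mat n k \<and> G \<in> carrier_mat k n \<and> cs \<in> carrier_vec k \<and>
    G * K = 1\<^sub>m k \<and> A * K = K * compan k cs \<and> G * A = compan k cs * G \<and> E * K = K \<and> G * E = G"
proof -
  define K where "K = kmat n A v k"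
  have K: "K \<in> carrier_mat n k" unfolding K_def by simp
  have indK: "indep K" unfolding K_def kdef using kdim_props(3)[OF A v] .
  obtain cs where cs: "cs \<in> carrier_vec k" "kv A v k = K *\<^sub>v cs"
    using kdim_props(1)[OF A v] unfolding in_span_def K_def kdef by auto
  define C where "C = compan k cs"
  have C: "C \<in> carrier_mat k k" unfolding C_def compan_def by simp
  have AK: "A * K = K * C" unfolding K_def C_def
    by (rule kmat_comp[OF A v cs(1) k1], insert cs(2), simp add: K_def)
  define bs0 where "bs0 = map (kv A v) [0..<k]"
  have bs0: "set bs0 \<subseteq> carrier_vec n" unfolding bs0_def using A v by auto
  have indbs0: "indep (mat_of_cols n bs0)" using indK unfolding K_def kmat_def bs0_def .
  have us: "set (map (unit_vec n) [0..<n]) \<subseteq> carrier_vec n" by auto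
  obtain bs where bs: "set bs \<subseteq> set (map (unit_vec n) [0..<n])" "indep (mat_of_cols n (bs0 @ bs))"
    "\<forall>w \<in> set (map (unit_vec n) [0..<n]) \<union> set bs0. in_span (mat_of_cols n (bs0 @ bs)) w"
    using greedy_basis[OF bs0 indbs0 us] by blast
  define m where "m = length (bs0 @ bs)"
  define P where "P = mat_of_cols n (bs0 @ bs)"
  have P: "P \<in> carrier_mat n m" unfolding P_def m_def by (rule mat_of_cols_carrier)
  have spP: "\<exists>c \<in> carrier_vec m. unit_vec n j = P *\<^sub>v c" if "j < n" for j
  proof -
    have "unit_vec n j \<in> set (map (unit_vec n) [0..<n])" using that by simp
    hence "in_span P (unit_vec n j)" using bs(3) unfolding P_def by blast
    thus ?thesis unfolding in_span_def P_def m_def by simp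
  qed
  obtain X where X: "X \<in> carrier_mat m n" "P * X = 1\<^sub>m n" using span_right_inverse[OF P spP] by blast
  have "m \<le> n" using indep_le[OF P] bs(2) unfolding P_def by simp
  moreover have "n \<le> m" using span_ge[OF P spP] .
  ultimately have mn: "m = n" by simp
  have P': "P \<in> carrier_mat n n" using P mn by simp
  have X': "X \<in> carrier_mat n n" using X(1) mn by simp
  have XP: "X * P = 1\<^sub>m n" using mat_mult_left_right_inverse[OF P' X' X(2)] .
  have km: "k \<le> m" unfolding m_def bs0_def by simp
  define f where "f = row X (k - 1)"
  have dX: "dim_col X = n" using X' by simp
  have f: "f \<in> carrier_vec n" unfolding f_def by (rule carrier_vecI, simp add: dX)
  have fkv: "f \<bullet> kv A v j = (if j = k - 1 then 1 else 0)" if "j < k" for j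
  proof -
    have kn: "k - 1 < n" "j < n" using that k1 km mn by linarith+
    have jl: "j < length (bs0 @ bs)" using that unfolding bs0_def by simp
    have nj: "(bs0 @ bs) ! j = kv A v j" using that unfolding bs0_def by (simp add: nth_append)
    have colP: "col P j = kv A v j" unfolding P_def
      using col_mat_of_cols[OF jl, of n] nj kv_carrier[OF A v, of j] by simp
    have rX: "dim_row X = n" "dim_col P = n" using X' P' by simp_all
    have "(X * P) $$ (k - 1, j) = row X (k - 1) \<bullet> col P j"
      using index_mult_mat(1)[of "k - 1" X j P] kn rX by simp
    hence "(X * P) $$ (k - 1, j) = f \<bullet> kv A v j" unfolding f_def colP .
    thus ?thesis unfolding XP by (subst (asm) index_one_mat(1)[OF kn], auto)
  qed
  define f' where "f' = transpose_mat E *\<^sub>v f"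
  have ET: "transpose_mat E \<in> carrier_mat n n" using E by simp
  have AT: "transpose_mat A \<in> carrier_mat n n" using A by simp
  have f': "f' \<in> carrier_vec n" unfolding f'_def using ET f by simp
  have f'kv: "f' \<bullet> kv A v j = (if j = k - 1 then 1 else 0)" if "j < k" for j
  proof -
    have "f' \<bullet> kv A v j = f \<bullet> (E *\<^sub>v kv A v j)" unfolding f'_def
      by (rule transpose_vec_mult_scalar[OF E], insert A v f, auto)
    also have "\<dots> = f \<bullet> kv A v j" using kv_commute[OF A E EA v Ev] by simp
    finally show ?thesis using fkv[OF that] by simp
  qed
  have ETf': "transpose_mat E *\<^sub>v f' = f'"
    unfolding f'_def using assoc_mult_mat_vec[OF ET ET f, symmetric] transpose_idem[OF E EE] by simp
  define Hk where "Hk = mat k k (\<lambda>(i,j). f' \<bullet> kv A v (i + j))"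
  have Hk: "Hk \<in> carrier_mat k k" unfolding Hk_def by simp
  define Fm where "Fm = kmat n (transpose_mat A) f' k"
  have Fm: "Fm \<in> carrier_mat n k" unfolding Fm_def by simp
  have FK: "transpose_mat Fm * K = Hk"
  proof (rule eq_matI)
    fix i j assume "i < dim_row Hk" "j < dim_col Hk"
    hence i: "i < k" and j: "j < k" unfolding Hk_def by auto
    have "(transpose_mat Fm * K) $$ (i, j) = col Fm i \<bullet> col K j"
      using i j Fm K by auto
    also have "\<dots> = kv (transpose_mat A) f' i \<bullet> kv A v j"
      unfolding Fm_def K_def using col_kmat[OF i AT f'] col_kmat[OF j A v] by simp
    also have "\<dots> = Hk $$ (i, j)" unfolding Hk_def using i j kv_transpose_scalar[OF A v f'] by simp
    finally show "(transpose_mat Fm * K) $$ (i, j) = Hk $$ (i, j)" .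
  qed (insert Fm K Hk, auto)
  have KF: "transpose_mat K * Fm = Hk"
  proof (rule eq_matI)
    fix i j assume "i < dim_row Hk" "j < dim_col Hk"
    hence i: "i < k" and j: "j < k" unfolding Hk_def by auto
    have "(transpose_mat K * Fm) $$ (i, j) = col K i \<bullet> col Fm j"
      using i j Fm K by auto
    also have "\<dots> = kv A v i \<bullet> kv (transpose_mat A) f' j"
      unfolding Fm_def K_def using col_kmat[OF i A v] col_kmat[OF j AT f'] by simp
    also have "\<dots> = kv (transpose_mat A) f' j \<bullet> kv A v i"
      by (rule comm_scalar_prod[of _ n], insert A v AT f', auto)
    also have "\<dots> = Hk $$ (i, j)" unfolding Hk_def using i j kv_transpose_scalar[OF A v f']
      by (simp add: add.commute)
    finally show "(transpose_mat K * Fm) $$ (i, j) = Hk $$ (i, j)" .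
  qed (insert Fm K Hk, auto)
  have Hker: "c = 0\<^sub>v k" if c: "c \<in> carrier_vec k" and "Hk *\<^sub>v c = 0\<^sub>v k" for c
    by (rule hankel_kernel[OF Hk_def _ c that(2)], rule f'kv)
  have indHk: "indep Hk" unfolding indep_def using Hker Hk by auto
  obtain Hi where Hi: "Hi \<in> carrier_mat k k" "Hk * Hi = 1\<^sub>m k" "Hi * Hk = 1\<^sub>m k"
    using inv_of_indep[OF Hk indHk] by blast
  have indFm: "indep Fm" unfolding indep_def
  proof (intro ballI impI)
    fix d assume d: "d \<in> carrier_vec (dim_col Fm)" and "Fm *\<^sub>v d = 0\<^sub>v (dim_row Fm)"
    hence d: "d \<in> carrier_vec k" and Fd: "Fm *\<^sub>v d = 0\<^sub>v n" using Fm by auto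
    have "Hk *\<^sub>v d = transpose_mat K *\<^sub>v (Fm *\<^sub>v d)"
      unfolding KF[symmetric] using K Fm d by (simp add: assoc_mult_mat_vec)
    also have "\<dots> = 0\<^sub>v k" unfolding Fd using K by (intro mult_mat_vec_0, simp)
    finally show "d = 0\<^sub>v (dim_col Fm)" using Hker[OF d] Fm by simp
  qed
  have kdimf: "kdim n (transpose_mat A) f' = k"
  proof -
    have "k \<le> kdim n (transpose_mat A) f'" by (rule kdim_ge[OF AT f'], fold Fm_def, rule indFm)
    moreover have "kdim n (transpose_mat A) f' \<le> k" by (rule kmax[OF f' ETf'])
    ultimately show ?thesis by simp
  qed
  obtain cs' where cs': "cs' \<in> carrier_vec k" "kv (transpose_mat A) f' k = Fm *\<^sub>v cs'"
    using kdim_props(1)[OF AT f'] unfolding in_span_def Fm_def kdimf by auto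
  define C' where "C' = compan k cs'"
  have C': "C' \<in> carrier_mat k k" unfolding C'_def compan_def by simp
  have AF: "transpose_mat A * Fm = Fm * C'" unfolding Fm_def C'_def
    by (rule kmat_comp[OF AT f' cs'(1) k1], insert cs'(2), simp add: Fm_def)
  define F where "F = transpose_mat Fm"
  have F: "F \<in> carrier_mat k n" unfolding F_def using Fm by simp
  have FA: "F * A = transpose_mat C' * F"
  proof -
    have "transpose_mat (transpose_mat A * Fm) = transpose_mat Fm * A"
      using transpose_mult[OF AT Fm] by simp
    moreover have "transpose_mat (Fm * C') = transpose_mat C' * transpose_mat Fm"
      using transpose_mult[OF Fm C'] .
    ultimately show ?thesis unfolding F_def AF by simp
  qed
  have FK': "F * K = Hk" unfolding F_def using FK .
  have HC: "Hk * C = transpose_mat C' * Hk"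
  proof -
    have "Hk * C = F * (A * K)" unfolding AK FK'[symmetric] using F K C by (simp add: assoc_mult_mat)
    also have "\<dots> = (F * A) * K" using F A K by (simp add: assoc_mult_mat)
    also have "\<dots> = transpose_mat C' * Hk" unfolding FA FK'[symmetric] using C' F K
      by (simp add: assoc_mult_mat)
    finally show ?thesis .
  qed
  define G where "G = Hi * F"
  have G: "G \<in> carrier_mat k n" unfolding G_def using Hi F by simp
  have GK: "G * K = 1\<^sub>m k" unfolding G_def using Hi F K FK' by (simp add: assoc_mult_mat)
  have HiC: "Hi * transpose_mat C' = C * Hi"
  proof -
    have CT: "transpose_mat C' \<in> carrier_mat k k" using C' by simp
    have "Hi * transpose_mat C' = Hi * transpose_mat C' * (Hk * Hi)" unfolding Hi(2) using Hi CT by simp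
    also have "\<dots> = Hi * (transpose_mat C' * (Hk * Hi))" using assoc_mult_mat[OF Hi(1) CT, of "Hk * Hi" k] Hk Hi(1) by simp
    also have "\<dots> = Hi * ((transpose_mat C' * Hk) * Hi)" using assoc_mult_mat[OF CT Hk Hi(1)] by simp
    also have "\<dots> = Hi * (transpose_mat C' * Hk) * Hi"
      using assoc_mult_mat[OF Hi(1) mult_carrier_mat[OF CT Hk] Hi(1)] by (rule sym)
    also have "\<dots> = (Hi * Hk) * C * Hi" unfolding HC[symmetric] using assoc_mult_mat[OF Hi(1) Hk C] by simp
    also have "\<dots> = C * Hi" unfolding Hi(3) using C Hi by simp
    finally show ?thesis .
  qed
  have GA: "G * A = C * G"
  proof -
    have CT: "transpose_mat C' \<in> carrier_mat k k" using C' by simp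
    have "G * A = Hi * (F * A)" unfolding G_def using Hi(1) F A by (simp add: assoc_mult_mat)
    also have "\<dots> = (Hi * transpose_mat C') * F" unfolding FA using Hi(1) CT F by (simp add: assoc_mult_mat)
    also have "\<dots> = C * G" unfolding HiC G_def using C Hi(1) F by (simp add: assoc_mult_mat)
    finally show ?thesis .
  qed
  have EK: "E * K = K"
  proof (rule mat_col_eqI)
    fix j assume "j < dim_col K"
    hence j: "j < k" using K by simp
    show "col (E * K) j = col K j" using col_mult2[OF E K j] col_kmat[OF j A v] kv_commute[OF A E EA v Ev]
      unfolding K_def by simp
  qed (insert E K, auto)
  have EF: "transpose_mat E * Fm = Fm"
  proof (rule mat_col_eqI)
    fix j assume "j < dim_col Fm"
    hence j: "j < k" using Fm by simp
    show "col (transpose_mat E * Fm) j = col Fm j"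
      using col_mult2[OF ET Fm j] col_kmat[OF j AT f'] kv_commute[OF AT ET transpose_comm[OF A E EA] f' ETf']
      unfolding Fm_def by simp
  qed (insert ET Fm, auto)
  have FE: "F * E = F"
  proof -
    have "transpose_mat (transpose_mat E * Fm) = F * E" unfolding F_def using transpose_mult[OF ET Fm] by simp
    thus ?thesis unfolding EF F_def by simp
  qed
  have GE: "G * E = G" unfolding G_def using Hi(1) F E FE by (simp add: assoc_mult_mat)
  show ?thesis using K G cs(1) GK AK GA EK GE unfolding C_def by blast
qed

inductive_set eig_span :: "'a::field mat \<Rightarrow> 'a mat \<Rightarrow> 'a set \<Rightarrow> nat \<Rightarrow> 'a vec set"
  for D E L n where
  es_zero: "0\<^sub>v n \<in> eig_span D E L n"
| es_add: "y \<in> eig_span D E L n \<Longrightarrow> w \<in> carrier_vec n \<Longrightarrow> E *\<^sub>v w = w \<Longrightarrow> c \<in> L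
    \<Longrightarrow> D *\<^sub>v w = c \<cdot>\<^sub>v w \<Longrightarrow> w + y \<in> eig_span D E L n"

lemma eig_span_carrier: "x \<in> eig_span D E L n \<Longrightarrow> x \<in> carrier_vec n"
  by (induction rule: eig_span.induct, auto)

lemma eig_span_mono: "x \<in> eig_span D E L n \<Longrightarrow> L \<subseteq> L' \<Longrightarrow> x \<in> eig_span D E L' n"
  by (induction rule: eig_span.induct, auto intro: eig_span.intros)

lemma eig_span_add:
  assumes "x \<in> eig_span D E L n" "y \<in> eig_span D E L n"
  shows "x + y \<in> eig_span D E L n"
  using assms
proof (induction rule: eig_span.induct)
  case es_zero
  thus ?case using eig_span_carrier[OF es_zero.prems] by simp
next
  case (es_add x w c)
  have "(w + x) + y = w + (x + y)"
    using es_add eig_span_carrier by (metis assoc_add_vec)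
  thus ?case using es_add by (auto intro: eig_span.intros)
qed

lemma smult_one_mult_vec:
  fixes x :: "'a::field vec"
  assumes x: "x \<in> carrier_vec n"
  shows "(\<mu> \<cdot>\<^sub>m 1\<^sub>m n) *\<^sub>v x = \<mu> \<cdot>\<^sub>v x"
proof (rule eq_vecI)
  fix i assume "i < dim_vec (\<mu> \<cdot>\<^sub>v x)"
  hence i: "i < n" using x by simp
  have r: "row (\<mu> \<cdot>\<^sub>m 1\<^sub>m n) i = \<mu> \<cdot>\<^sub>v unit_vec n i" using i by (intro eq_vecI, auto simp: unit_vec_def)
  show "((\<mu> \<cdot>\<^sub>m 1\<^sub>m n) *\<^sub>v x) $ i = (\<mu> \<cdot>\<^sub>v x) $ i"
    using i x by (simp add: r scalar_prod_left_unit)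
qed (insert x, simp)

lemma lin_vec:
  fixes D :: "'a::field mat"
  assumes D: "D \<in> carrier_mat n n" and x: "x \<in> carrier_vec n"
  shows "(D - \<mu> \<cdot>\<^sub>m 1\<^sub>m n) *\<^sub>v x = D *\<^sub>v x - \<mu> \<cdot>\<^sub>v x"
  using minus_mult_distrib_mat_vec[OF D _ x, of "\<mu> \<cdot>\<^sub>m 1\<^sub>m n"] smult_one_mult_vec[OF x] by simp

lemma scalar_comm:
  fixes X :: "'a::field mat"
  assumes X: "X \<in> carrier_mat n n"
  shows "X * (\<mu> \<cdot>\<^sub>m 1\<^sub>m n) = \<mu> \<cdot>\<^sub>m X" "(\<mu> \<cdot>\<^sub>m 1\<^sub>m n) * X = \<mu> \<cdot>\<^sub>m X"
proof -
  show "X * (\<mu> \<cdot>\<^sub>m 1\<^sub>m n) = \<mu> \<cdot>\<^sub>m X" using mult_smult_distrib[OF X one_carrier_mat] X by simp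
  show "(\<mu> \<cdot>\<^sub>m 1\<^sub>m n) * X = \<mu> \<cdot>\<^sub>m X" using mult_smult_assoc_mat[OF one_carrier_mat X] X by simp
qed

lemma lin_comm:
  fixes X Y :: "'a::field mat"
  assumes X: "X \<in> carrier_mat n n" and Y: "Y \<in> carrier_mat n n" and XY: "X * Y = Y * X"
  shows "(X - \<mu> \<cdot>\<^sub>m 1\<^sub>m n) * Y = Y * (X - \<mu> \<cdot>\<^sub>m 1\<^sub>m n)"
proof -
  have S: "\<mu> \<cdot>\<^sub>m 1\<^sub>m n \<in> carrier_mat n n" by simp
  have "(X - \<mu> \<cdot>\<^sub>m 1\<^sub>m n) * Y = X * Y - (\<mu> \<cdot>\<^sub>m 1\<^sub>m n) * Y"
    by (rule minus_mult_distrib_mat[OF X S Y])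
  also have "\<dots> = Y * X - Y * (\<mu> \<cdot>\<^sub>m 1\<^sub>m n)" unfolding XY scalar_comm[OF Y] ..
  also have "\<dots> = Y * (X - \<mu> \<cdot>\<^sub>m 1\<^sub>m n)"
    by (rule mult_minus_distrib_mat[OF Y X S, symmetric])
  finally show ?thesis .
qed

fun anp :: "'a::field mat \<Rightarrow> nat \<Rightarrow> 'a list \<Rightarrow> 'a mat" where
  "anp D n [] = 1\<^sub>m n"
| "anp D n (\<mu> # S) = (D - \<mu> \<cdot>\<^sub>m 1\<^sub>m n) * anp D n S"

lemma anp_carrier[simp]: "D \<in> carrier_mat n n \<Longrightarrow> anp D n S \<in> carrier_mat n n"
  by (induction S, auto)

lemma anp_comm:
  fixes D :: "'a::field mat"
  assumes D: "D \<in> carrier_mat n n"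
  shows "D * anp D n S = anp D n S * D"
proof (induction S)
  case Nil thus ?case using D by simp
next
  case (Cons \<mu> S)
  have L: "D - \<mu> \<cdot>\<^sub>m 1\<^sub>m n \<in> carrier_mat n n" by (rule minus_carrier_mat, simp)
  have N: "anp D n S \<in> carrier_mat n n" using D by simp
  have DL: "D * (D - \<mu> \<cdot>\<^sub>m 1\<^sub>m n) = (D - \<mu> \<cdot>\<^sub>m 1\<^sub>m n) * D"
    by (rule lin_comm[OF D D refl, symmetric])
  have "D * anp D n (\<mu> # S) = (D * (D - \<mu> \<cdot>\<^sub>m 1\<^sub>m n)) * anp D n S"
    using assoc_mult_mat[OF D L N] by simp
  also have "\<dots> = (D - \<mu> \<cdot>\<^sub>m 1\<^sub>m n) * (D * anp D n S)"
    unfolding DL using assoc_mult_mat[OF L D N] by simp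
  also have "\<dots> = (D - \<mu> \<cdot>\<^sub>m 1\<^sub>m n) * anp D n S * D"
    unfolding Cons using assoc_mult_mat[OF L N D] by simp
  finally show ?case by simp
qed

lemma anp_Cons_vec:
  fixes D :: "'a::field mat"
  assumes D: "D \<in> carrier_mat n n" and x: "x \<in> carrier_vec n"
  shows "anp D n (\<mu> # S) *\<^sub>v x = anp D n S *\<^sub>v (D *\<^sub>v x - \<mu> \<cdot>\<^sub>v x)"
proof -
  have L: "D - \<mu> \<cdot>\<^sub>m 1\<^sub>m n \<in> carrier_mat n n" by (rule minus_carrier_mat, simp)
  have N: "anp D n S \<in> carrier_mat n n" using D by simp
  have "anp D n (\<mu> # S) = anp D n S * (D - \<mu> \<cdot>\<^sub>m 1\<^sub>m n)"
    using lin_comm[OF D N anp_comm[OF D]] by simp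
  hence "anp D n (\<mu> # S) *\<^sub>v x = anp D n S *\<^sub>v ((D - \<mu> \<cdot>\<^sub>m 1\<^sub>m n) *\<^sub>v x)"
    using assoc_mult_mat_vec[OF N L x] by simp
  thus ?thesis using lin_vec[OF D x] by simp
qed

lemma transpose_lin:
  fixes D :: "'a::field mat"
  assumes D: "D \<in> carrier_mat n n"
  shows "transpose_mat (D - \<mu> \<cdot>\<^sub>m 1\<^sub>m n) = transpose_mat D - \<mu> \<cdot>\<^sub>m 1\<^sub>m n"
  using D by (intro eq_matI, auto)

lemma anp_transpose:
  fixes D :: "'a::field mat"
  assumes D: "D \<in> carrier_mat n n"
  shows "anp (transpose_mat D) n S = transpose_mat (anp D n S)"
proof (induction S)
  case Nil thus ?case by simp
next
  case (Cons \<mu> S)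
  have L: "D - \<mu> \<cdot>\<^sub>m 1\<^sub>m n \<in> carrier_mat n n" by (rule minus_carrier_mat, simp)
  have N: "anp D n S \<in> carrier_mat n n" using D by simp
  have "anp (transpose_mat D) n (\<mu> # S) = transpose_mat (D - \<mu> \<cdot>\<^sub>m 1\<^sub>m n) * transpose_mat (anp D n S)"
    using Cons transpose_lin[OF D] by simp
  also have "\<dots> = transpose_mat (anp D n S * (D - \<mu> \<cdot>\<^sub>m 1\<^sub>m n))"
    using transpose_mult[OF N L] by simp
  also have "anp D n S * (D - \<mu> \<cdot>\<^sub>m 1\<^sub>m n) = anp D n (\<mu> # S)"
    using lin_comm[OF D N anp_comm[OF D]] by simp
  finally show ?case .
qed

lemma eig_preimage:
  fixes D :: "'a::field mat"
  assumes D: "D \<in> carrier_mat n n" and E: "E \<in> carrier_mat n n"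
    and y: "y \<in> eig_span D E L n" and mu: "\<mu> \<notin> L"
  shows "\<exists>z \<in> eig_span D E L n. D *\<^sub>v z - \<mu> \<cdot>\<^sub>v z = y"
  using y
proof (induction rule: eig_span.induct)
  case es_zero
  show ?case using D by (intro bexI[of _ "0\<^sub>v n"], auto intro: eig_span.intros)
next
  case (es_add y w c)
  from es_add.IH obtain z where z: "z \<in> eig_span D E L n" "D *\<^sub>v z - \<mu> \<cdot>\<^sub>v z = y" by auto
  have cm: "c - \<mu> \<noteq> 0" using es_add.hyps(4) mu by auto
  define w' where "w' = (1 / (c - \<mu>)) \<cdot>\<^sub>v w"
  have w': "w' \<in> carrier_vec n" unfolding w'_def using es_add by simp
  have Ew': "E *\<^sub>v w' = w'" unfolding w'_def mult_mat_vec[OF E es_add.hyps(2)] es_add.hyps(3) ..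
  have Dw': "D *\<^sub>v w' = c \<cdot>\<^sub>v w'" unfolding w'_def mult_mat_vec[OF D es_add.hyps(2)] es_add.hyps(5)
    using es_add.hyps(2) by (intro eq_vecI, auto)
  have zc: "z \<in> carrier_vec n" using eig_span_carrier[OF z(1)] .
  have "w' + z \<in> eig_span D E L n" using z(1) w' Ew' es_add.hyps(4) Dw' by (rule eig_span.intros)
  moreover have "D *\<^sub>v (w' + z) - \<mu> \<cdot>\<^sub>v (w' + z) = w + y"
  proof -
    have dist: "D *\<^sub>v (w' + z) = D *\<^sub>v w' + D *\<^sub>v z" by (rule mult_add_distrib_mat_vec[OF D w' zc])
    show ?thesis
    proof (rule eq_vecI)
      fix i assume "i < dim_vec (w + y)"
      hence i: "i < n" using eig_span_carrier[OF es_add.hyps(1)] by simp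
      have yi: "y $ i = (D *\<^sub>v z) $ i - \<mu> * z $ i"
        using arg_cong[OF z(2), of "\<lambda>v. v $ i"] i zc D by simp
      have di: "(D *\<^sub>v w') $ i = c * w' $ i" using arg_cong[OF Dw', of "\<lambda>v. v $ i"] i w' by simp
      have wi: "w' $ i = w $ i / (c - \<mu>)" unfolding w'_def using i es_add.hyps(2) by simp
      have yc: "y \<in> carrier_vec n" using eig_span_carrier[OF es_add.hyps(1)] .
      have e1: "(D *\<^sub>v (w' + z) - \<mu> \<cdot>\<^sub>v (w' + z)) $ i
          = (D *\<^sub>v w') $ i + (D *\<^sub>v z) $ i - \<mu> * (w' $ i + z $ i)"
        unfolding dist using i zc w' D by (simp del: index_mult_mat_vec)
      have e2: "(w + y) $ i = w $ i + y $ i" using i yc by simp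
      have "c * w' $ i - \<mu> * w' $ i = (c - \<mu>) * (w $ i / (c - \<mu>))" unfolding wi by (rule left_diff_distrib[symmetric])
      also have "\<dots> = w $ i" using cm by simp
      finally have "w $ i = c * w' $ i - \<mu> * w' $ i" by simp
      thus "(D *\<^sub>v (w' + z) - \<mu> \<cdot>\<^sub>v (w' + z)) $ i = (w + y) $ i"
        unfolding e1 e2 di yi by (simp add: algebra_simps)
    qed (insert D zc w' es_add.hyps(2) eig_span_carrier[OF es_add.hyps(1)], simp)
  qed
  ultimately show ?case by blast
qed


lemma anp_span:
  fixes D :: "'a::field mat"
  assumes D: "D \<in> carrier_mat n n"
  shows "distinct S \<Longrightarrow> x \<in> carrier_vec n \<Longrightarrow> anp D n S *\<^sub>v x = 0\<^sub>v n \<Longrightarrow> x \<in> eig_span D (1\<^sub>m n) (set S) n"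
proof (induction S arbitrary: x)
  case Nil
  hence "x = 0\<^sub>v n" by simp
  thus ?case by (simp add: eig_span.intros)
next
  case (Cons \<mu> S)
  define y where "y = D *\<^sub>v x - \<mu> \<cdot>\<^sub>v x"
  have yc: "y \<in> carrier_vec n" unfolding y_def using D Cons.prems(2) by simp
  have "anp D n S *\<^sub>v y = 0\<^sub>v n" using anp_Cons_vec[OF D Cons.prems(2), of \<mu> S] Cons.prems(3) unfolding y_def by simp
  hence ysp: "y \<in> eig_span D (1\<^sub>m n) (set S) n" using Cons.IH Cons.prems(1) yc by simp
  have mu: "\<mu> \<notin> set S" using Cons.prems(1) by simp
  obtain z where z: "z \<in> eig_span D (1\<^sub>m n) (set S) n" "D *\<^sub>v z - \<mu> \<cdot>\<^sub>v z = y"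
    using eig_preimage[OF D one_carrier_mat ysp mu] by blast
  have zc: "z \<in> carrier_vec n" using eig_span_carrier[OF z(1)] .
  have xc: "x \<in> carrier_vec n" using Cons.prems(2) .
  define x' where "x' = x - z"
  have x'c: "x' \<in> carrier_vec n" unfolding x'_def using xc zc by simp
  have Dx': "D *\<^sub>v x' = \<mu> \<cdot>\<^sub>v x'"
  proof -
    have dist: "D *\<^sub>v x' = D *\<^sub>v x - D *\<^sub>v z" unfolding x'_def by (rule mult_minus_distrib_mat_vec[OF D xc zc])
    show ?thesis
    proof (rule eq_vecI)
      fix i assume "i < dim_vec (\<mu> \<cdot>\<^sub>v x')"
      hence i: "i < n" using x'c by simp
      have yi1: "y $ i = (D *\<^sub>v x) $ i - \<mu> * x $ i" unfolding y_def using i D xc by (simp del: index_mult_mat_vec)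
      have yi2: "y $ i = (D *\<^sub>v z) $ i - \<mu> * z $ i" using arg_cong[OF z(2), of "\<lambda>v. v $ i"] i D zc
        by (simp del: index_mult_mat_vec)
      have "(D *\<^sub>v x') $ i = (D *\<^sub>v x) $ i - (D *\<^sub>v z) $ i" unfolding dist using i D by (simp del: index_mult_mat_vec)
      also have "\<dots> = \<mu> * x $ i - \<mu> * z $ i" using yi1 yi2 by (simp add: algebra_simps)
      also have "\<dots> = (\<mu> \<cdot>\<^sub>v x') $ i" unfolding x'_def using i xc zc by (simp add: algebra_simps)
      finally show "(D *\<^sub>v x') $ i = (\<mu> \<cdot>\<^sub>v x') $ i" .
    qed (insert D x'c, simp)
  qed
  have z2: "z \<in> eig_span D (1\<^sub>m n) (set (\<mu> # S)) n" by (rule eig_span_mono[OF z(1)], auto)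
  have "x' + z \<in> eig_span D (1\<^sub>m n) (set (\<mu> # S)) n"
    by (rule eig_span.intros(2)[OF z2 x'c _ _ Dx'], insert x'c, auto)
  moreover have "x' + z = x" unfolding x'_def using xc zc by (intro eq_vecI, auto)
  ultimately show ?case by simp
qed



lemma indep_nil: "indep (mat_of_cols n ([] :: 'a::field vec list))"
  unfolding indep_def by (auto intro!: eq_vecI)

lemma diag_from_span:
  fixes D :: "'a::{finite,field} mat"
  assumes D: "D \<in> carrier_mat n n"
    and sp: "\<And>x. x \<in> carrier_vec n \<Longrightarrow> x \<in> eig_span D (1\<^sub>m n) UNIV n"
  shows "diagonalizable_mat n D"
proof -
  define Eg where "Eg = {w \<in> carrier_vec n. \<exists>c. D *\<^sub>v w = c \<cdot>\<^sub>v w}"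
  have "finite Eg" unfolding Eg_def using finite_carrier_vec[of n] by (rule rev_finite_subset, auto)
  then obtain ws where ws: "set ws = Eg" using finite_list by blast
  have wsc: "set ws \<subseteq> carrier_vec n" unfolding ws Eg_def by auto
  obtain bs where bs: "set bs \<subseteq> set ws" "indep (mat_of_cols n ([] @ bs))"
    "\<forall>w \<in> set ws \<union> set []. in_span (mat_of_cols n ([] @ bs)) w"
    using greedy_basis[OF _ indep_nil wsc] by (metis empty_set empty_subsetI)
  define U where "U = mat_of_cols n bs"
  define m where "m = length bs"
  have U: "U \<in> carrier_mat n m" unfolding U_def m_def by (rule mat_of_cols_carrier)
  have bsc: "set bs \<subseteq> carrier_vec n" using bs(1) wsc by auto
  have spU: "in_span U x" if "x \<in> carrier_vec n" for x
  proof -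
    have "x \<in> eig_span D (1\<^sub>m n) UNIV n" using sp[OF that] .
    thus ?thesis
    proof (induction rule: eig_span.induct)
      case es_zero
      show ?case using in_span_zero[of U] U by simp
    next
      case (es_add y w c)
      have "w \<in> Eg" unfolding Eg_def using es_add by auto
      hence "in_span U w" using bs(3) ws unfolding U_def by auto
      thus ?case using in_span_add es_add.IH by blast
    qed
  qed
  have spU': "\<exists>c \<in> carrier_vec m. unit_vec n j = U *\<^sub>v c" if "j < n" for j
    using spU[of "unit_vec n j"] U unfolding in_span_def by simp
  obtain X where X: "X \<in> carrier_mat m n" "U * X = 1\<^sub>m n" using span_right_inverse[OF U spU'] by blast
  have "m \<le> n" using indep_le[OF U] bs(2) unfolding U_def by simp
  moreover have "n \<le> m" using span_ge[OF U spU'] .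
  ultimately have mn: "m = n" by simp
  have U': "U \<in> carrier_mat n n" using U mn by simp
  have X': "X \<in> carrier_mat n n" using X(1) mn by simp
  have XU: "X * U = 1\<^sub>m n" using mat_mult_left_right_inverse[OF U' X' X(2)] .
  define ev where "ev = (\<lambda>w. SOME c. D *\<^sub>v w = c \<cdot>\<^sub>v w)"
  have ev: "D *\<^sub>v w = ev w \<cdot>\<^sub>v w" if "w \<in> set bs" for w
  proof -
    have "w \<in> Eg" using that bs(1) ws by auto
    hence "\<exists>c. D *\<^sub>v w = c \<cdot>\<^sub>v w" unfolding Eg_def by auto
    thus ?thesis unfolding ev_def by (rule someI_ex)
  qed
  define Lam where "Lam = mat n n (\<lambda>(i,j). if i = j then ev (bs ! i) else 0)"
  have Lam: "Lam \<in> carrier_mat n n" unfolding Lam_def by simp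
  have DU: "D * U = U * Lam"
  proof (rule mat_col_eqI)
    fix j assume "j < dim_col (U * Lam)"
    hence j: "j < n" using Lam by simp
    have jl: "j < length bs" using j mn unfolding m_def by simp
    have bj: "bs ! j \<in> carrier_vec n" using bsc nth_mem[OF jl] by auto
    have colU: "col U j = bs ! j" unfolding U_def by (rule col_mat_of_cols[OF jl bj])
    have colL: "col Lam j = ev (bs ! j) \<cdot>\<^sub>v unit_vec n j" unfolding Lam_def using j
      by (intro eq_vecI, auto simp: unit_vec_def)
    have "col (D * U) j = D *\<^sub>v bs ! j" using col_mult2[OF D U' j] colU by simp
    also have "\<dots> = ev (bs ! j) \<cdot>\<^sub>v bs ! j" using ev nth_mem[OF jl] by simp
    also have "\<dots> = ev (bs ! j) \<cdot>\<^sub>v (U *\<^sub>v unit_vec n j)" using mult_unit_vec_col[OF U' j] colU by simp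
    also have "\<dots> = U *\<^sub>v col Lam j" unfolding colL using mult_mat_vec[OF U' unit_vec_carrier] by simp
    also have "\<dots> = col (U * Lam) j" using col_mult2[OF U' Lam j] by simp
    finally show "col (D * U) j = col (U * Lam) j" .
  qed (insert D U' Lam, auto)
  have XDU: "X * D * U = Lam"
  proof -
    have "X * D * U = X * (D * U)" using assoc_mult_mat[OF X' D U'] .
    also have "\<dots> = (X * U) * Lam" unfolding DU using assoc_mult_mat[OF X' U' Lam] by simp
    finally show ?thesis unfolding XU using Lam by simp
  qed
  have dL: "diagonal_mat Lam" unfolding diagonal_mat_def Lam_def by auto
  show ?thesis unfolding diagonalizable_mat_def
    by (rule exI[of _ U], rule exI[of _ X], unfold XDU, intro conjI U' X' X(2) XU dL)
qed

definition dcol :: "nat \<Rightarrow> 'a::field vec \<Rightarrow> 'a \<Rightarrow> nat \<Rightarrow> 'a" where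
  "dcol k cs \<beta> i = (if odd k \<or> odd i then cs $ i else if i = k - 2 then \<beta> else 0)"

definition dcm :: "nat \<Rightarrow> 'a::field vec \<Rightarrow> 'a \<Rightarrow> 'a \<Rightarrow> 'a mat" where
  "dcm k cs a \<beta> = mat k k (\<lambda>(i,j). if j = k - 1 then dcol k cs \<beta> i
      else if i = j + 1 \<and> odd i then 1 else if j = i + 1 \<and> even i then a^2 else 0)"

lemma dcm_carrier[simp]: "dcm k cs a \<beta> \<in> carrier_mat k k" unfolding dcm_def by simp

lemma dcm_dims[simp]: "dim_row (dcm k cs a \<beta>) = k" "dim_col (dcm k cs a \<beta>) = k" unfolding dcm_def by simp_all

lemma dcm_mult_carrier[simp]: "x \<in> carrier_vec k \<Longrightarrow> dcm k cs a \<beta> *\<^sub>v x \<in> carrier_vec k"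
  by (rule mult_mat_vec_carrier[OF dcm_carrier])

lemma dcm_mult:
  fixes y :: "'a::field vec"
  assumes y: "y \<in> carrier_vec k" and i: "i < k"
  shows "(dcm k cs a \<beta> *\<^sub>v y) $ i = (if odd i then y $ (i - 1) else 0)
    + (if even i \<and> i + 1 < k - 1 then a^2 * y $ (i + 1) else 0) + dcol k cs \<beta> i * y $ (k - 1)"
proof -
  let ?M = "dcm k cs a \<beta>"
  have "(?M *\<^sub>v y) $ i = (\<Sum>j\<in>{0..<k}. ?M $$ (i, j) * y $ j)"
    using i y by (simp add: scalar_prod_def dcm_def)
  also have "\<dots> = (\<Sum>j\<in>{0..<k}. (if j = k - 1 then dcol k cs \<beta> i * y $ j else 0)
      + (if j = i - 1 then (if odd i then y $ j else 0) else 0)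
      + (if j = i + 1 then (if even i \<and> i + 1 < k - 1 then a^2 * y $ j else 0) else 0))"
  proof (rule sum.cong)
    fix j assume "j \<in> {0..<k}"
    hence j: "j < k" by simp
    show "?M $$ (i, j) * y $ j = (if j = k - 1 then dcol k cs \<beta> i * y $ j else 0)
      + (if j = i - 1 then (if odd i then y $ j else 0) else 0)
      + (if j = i + 1 then (if even i \<and> i + 1 < k - 1 then a^2 * y $ j else 0) else 0)"
      using i j unfolding dcm_def by (auto elim: oddE)
  qed simp
  also have "\<dots> = (if odd i then y $ (i - 1) else 0)
    + (if even i \<and> i + 1 < k - 1 then a^2 * y $ (i + 1) else 0) + dcol k cs \<beta> i * y $ (k - 1)"
    using i by (auto simp: sum.distrib)
  finally show ?thesis .
qed


definition hk :: "nat \<Rightarrow> nat" where "hk k = (if odd k then k - 1 else k - 2)"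

definition inW :: "nat \<Rightarrow> 'a::field vec \<Rightarrow> bool" where
  "inW k y \<longleftrightarrow> y \<in> carrier_vec k \<and> (\<forall>i. hk k \<le> i \<longrightarrow> i < k \<longrightarrow> y $ i = 0)"

lemma hk_even: "even (hk k)" unfolding hk_def by auto

lemma dcm_W:
  fixes y :: "'a::field vec"
  assumes k: "1 \<le> k" and y: "inW k y"
  shows "inW k (dcm k cs a \<beta> *\<^sub>v y)" "dcm k cs a \<beta> *\<^sub>v (dcm k cs a \<beta> *\<^sub>v y) = a^2 \<cdot>\<^sub>v y"
proof -
  let ?M = "dcm k cs a \<beta>"
  let ?h = "hk k"
  have yc: "y \<in> carrier_vec k" and y0: "\<And>i. ?h \<le> i \<Longrightarrow> i < k \<Longrightarrow> y $ i = 0" using y unfolding inW_def by auto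
  have hk1: "?h \<le> k - 1" unfolding hk_def by auto
  have he: "even ?h" by (rule hk_even)
  have gen: "(?M *\<^sub>v v) $ i = (if i < ?h then (if odd i then v $ (i - 1) else a^2 * v $ (i + 1)) else 0)"
    if v: "inW k v" and i: "i < k" for v i
  proof -
    have vc: "v \<in> carrier_vec k" and v0: "\<And>i. ?h \<le> i \<Longrightarrow> i < k \<Longrightarrow> v $ i = 0" using v unfolding inW_def by auto
    have last: "v $ (k - 1) = 0" using v0[of "k - 1"] hk1 k by simp
    show ?thesis
    proof (cases "i < ?h")
      case True
      have "even i \<Longrightarrow> i + 1 < k - 1" using True he hk1 by presburger
      thus ?thesis using True dcm_mult[OF vc i] last by auto
    next
      case False
      have o: "odd i \<Longrightarrow> v $ (i - 1) = 0"
      proof -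
        assume oi: "odd i"
        have "i \<noteq> ?h" using oi he by auto
        hence "?h \<le> i - 1" using False by auto
        thus ?thesis using v0 i by simp
      qed
      have e: "i + 1 < k - 1 \<Longrightarrow> v $ (i + 1) = 0" using v0 False by simp
      show ?thesis using False dcm_mult[OF vc i] last o e by auto
    qed
  qed
  have zc: "?M *\<^sub>v y \<in> carrier_vec k" by (rule mult_mat_vec_carrier[OF dcm_carrier yc])
  show W: "inW k (?M *\<^sub>v y)" unfolding inW_def using zc gen[OF y] by auto
  show "?M *\<^sub>v (?M *\<^sub>v y) = a^2 \<cdot>\<^sub>v y"
  proof (rule eq_vecI)
    fix i assume "i < dim_vec (a^2 \<cdot>\<^sub>v y)"
    hence i: "i < k" using yc by simp
    show "(?M *\<^sub>v (?M *\<^sub>v y)) $ i = (a^2 \<cdot>\<^sub>v y) $ i"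
    proof (cases "i < ?h")
      case True
      show ?thesis
      proof (cases "odd i")
        case True
        have i1: "i - 1 < ?h" "even (i - 1)" "i - 1 + 1 = i" using True \<open>i < ?h\<close> by (auto elim: oddE)
        show ?thesis using gen[OF W i] gen[OF y, of "i - 1"] i1 True \<open>i < ?h\<close> i yc by auto
      next
        case False
        have i1: "i + 1 < ?h" "odd (i + 1)" using False \<open>i < ?h\<close> he by (auto, presburger)
        show ?thesis using gen[OF W i] gen[OF y, of "i + 1"] i1 False \<open>i < ?h\<close> i yc hk1 by auto
      qed
    next
      case False
      thus ?thesis using gen[OF W i] y0[of i] i yc by simp
    qed
  qed (insert yc, simp)
qed


lemma anp_append:
  fixes D :: "'a::field mat"
  assumes D: "D \<in> carrier_mat n n"
  shows "anp D n (S1 @ S2) = anp D n S1 * anp D n S2"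
proof (induction S1)
  case Nil thus ?case using D by (simp add: left_mult_one_mat[OF anp_carrier[OF D]])
next
  case (Cons \<mu> S1)
  have L: "D - \<mu> \<cdot>\<^sub>m 1\<^sub>m n \<in> carrier_mat n n" by (rule minus_carrier_mat, simp)
  show ?case using Cons assoc_mult_mat[OF L anp_carrier[OF D] anp_carrier[OF D], of S1 S2] by simp
qed

lemma dcm_last_rows:
  fixes v :: "'a::field vec"
  assumes v: "v \<in> carrier_vec k" and k: "even k" "2 \<le> k"
  shows "(dcm k cs a \<beta> *\<^sub>v v) $ (k - 2) = \<beta> * v $ (k - 1)"
    "(dcm k cs a \<beta> *\<^sub>v v) $ (k - 1) = v $ (k - 2) + cs $ (k - 1) * v $ (k - 1)"
proof -
  have a: "k - 2 < k" "k - 1 < k" using k by auto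
  have b: "odd (k - 1)" "even (k - 2)" "k - 1 - 1 = k - 2" using k by auto
  show "(dcm k cs a \<beta> *\<^sub>v v) $ (k - 2) = \<beta> * v $ (k - 1)"
    using dcm_mult[OF v a(1)] b k unfolding dcol_def by auto
  show "(dcm k cs a \<beta> *\<^sub>v v) $ (k - 1) = v $ (k - 2) + cs $ (k - 1) * v $ (k - 1)"
    using dcm_mult[OF v a(2)] b k unfolding dcol_def by auto
qed

lemma tail_even:
  fixes x :: "'a::field vec"
  assumes x: "x \<in> carrier_vec k" and k: "even k" "2 \<le> k"
    and r: "r1 + r2 = cs $ (k - 1)" and \<beta>: "\<beta> = - (r1 * r2)"
  shows "inW k (anp (dcm k cs a \<beta>) k [r1, r2] *\<^sub>v x)"
proof -
  let ?M = "dcm k cs a \<beta>"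
  let ?\<tau> = "cs $ (k - 1)"
  define y1 where "y1 = ?M *\<^sub>v x - r1 \<cdot>\<^sub>v x"
  define y2 where "y2 = ?M *\<^sub>v y1 - r2 \<cdot>\<^sub>v y1"
  have y1c: "y1 \<in> carrier_vec k" unfolding y1_def using x by simp
  have y2c: "y2 \<in> carrier_vec k" unfolding y2_def using y1c by simp
  have eq: "anp ?M k [r1, r2] *\<^sub>v x = y2"
    unfolding y2_def y1_def using anp_Cons_vec[OF dcm_carrier x, where \<mu> = r1 and S = "[r2]"]
      anp_Cons_vec[OF dcm_carrier y1c[unfolded y1_def], where \<mu> = r2 and S = "[]"] x by simp
  have a: "k - 2 < k" "k - 1 < k" using k by auto
  have y1a: "y1 $ (k - 2) = \<beta> * x $ (k - 1) - r1 * x $ (k - 2)"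
    unfolding y1_def using dcm_last_rows(1)[OF x k] a x by simp
  have y1b: "y1 $ (k - 1) = x $ (k - 2) + ?\<tau> * x $ (k - 1) - r1 * x $ (k - 1)"
    unfolding y1_def using dcm_last_rows(2)[OF x k] a x by simp
  have y2a: "y2 $ (k - 2) = \<beta> * y1 $ (k - 1) - r2 * y1 $ (k - 2)"
    unfolding y2_def using dcm_last_rows(1)[OF y1c k] a y1c by simp
  have y2b: "y2 $ (k - 1) = y1 $ (k - 2) + ?\<tau> * y1 $ (k - 1) - r2 * y1 $ (k - 1)"
    unfolding y2_def using dcm_last_rows(2)[OF y1c k] a y1c by simp
  have z1: "y2 $ (k - 2) = 0" unfolding y2a y1a y1b \<beta> r[symmetric] by (simp add: algebra_simps)
  have z2: "y2 $ (k - 1) = 0" unfolding y2b y1a y1b \<beta> r[symmetric] by (simp add: algebra_simps)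
  have "hk k = k - 2" unfolding hk_def using k by simp
  hence "i = k - 2 \<or> i = k - 1" if "hk k \<le> i" "i < k" for i using that by auto
  hence "inW k y2" unfolding inW_def using y2c z1 z2 by auto
  thus ?thesis unfolding eq .
qed

lemma tail_odd:
  fixes x :: "'a::field vec"
  assumes x: "x \<in> carrier_vec k" and k: "odd k"
  shows "inW k (anp (dcm k cs a \<beta>) k [cs $ (k - 1)] *\<^sub>v x)"
proof -
  let ?M = "dcm k cs a \<beta>"
  define y where "y = ?M *\<^sub>v x - cs $ (k - 1) \<cdot>\<^sub>v x"
  have yc: "y \<in> carrier_vec k" unfolding y_def using x by simp
  have eq: "anp ?M k [cs $ (k - 1)] *\<^sub>v x = y"
    unfolding y_def using anp_Cons_vec[OF dcm_carrier x, where \<mu> = "cs $ (k - 1)" and S = "[]"] x by simp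
  have a: "k - 1 < k" "even (k - 1)" "\<not> (k - 1 + 1 < k - 1)" using k by (auto elim: oddE)
  have "y $ (k - 1) = 0" unfolding y_def using dcm_mult[OF x a(1)] a x k unfolding dcol_def by simp
  moreover have hk: "hk k = k - 1" unfolding hk_def using k by simp
  ultimately have "inW k y" unfolding inW_def using yc
  proof (intro conjI allI impI)
    fix i assume "hk k \<le> i" "i < k"
    hence "i = k - 1" using hk by auto
    thus "y $ i = 0" using \<open>y $ (k - 1) = 0\<close> by simp
  qed
  thus ?thesis unfolding eq .
qed

lemma anp_pm_W:
  fixes y :: "'a::field vec"
  assumes k: "1 \<le> k" and y: "inW k y"
  shows "anp (dcm k cs a \<beta>) k [a, - a] *\<^sub>v y = 0\<^sub>v k"
proof -
  let ?M = "dcm k cs a \<beta>"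
  have yc: "y \<in> carrier_vec k" using y unfolding inW_def by simp
  define z where "z = ?M *\<^sub>v y - a \<cdot>\<^sub>v y"
  have zc: "z \<in> carrier_vec k" unfolding z_def using yc by simp
  have ayc: "a \<cdot>\<^sub>v y \<in> carrier_vec k" using yc by simp
  have "anp ?M k [a, - a] *\<^sub>v y = anp ?M k [- a] *\<^sub>v z"
    unfolding z_def using anp_Cons_vec[OF dcm_carrier yc, where \<mu> = a and S = "[- a]"] by simp
  also have "\<dots> = ?M *\<^sub>v z - (- a) \<cdot>\<^sub>v z"
    using anp_Cons_vec[OF dcm_carrier zc, where \<mu> = "- a" and S = "[]"] zc by simp
  also have "?M *\<^sub>v z = ?M *\<^sub>v (?M *\<^sub>v y) - a \<cdot>\<^sub>v (?M *\<^sub>v y)"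
    unfolding z_def using mult_minus_distrib_mat_vec[OF dcm_carrier _ ayc]
      mult_mat_vec[OF dcm_carrier yc] yc by simp
  also have "?M *\<^sub>v (?M *\<^sub>v y) = a^2 \<cdot>\<^sub>v y" by (rule dcm_W(2)[OF k y])
  finally show ?thesis unfolding z_def using yc
    by (intro eq_vecI, auto simp del: index_mult_mat_vec simp: power2_eq_square algebra_simps)
qed

lemma anp_dcm_zero:
  fixes cs :: "'a::field vec"
  assumes k: "1 \<le> k"
    and R: "(odd k \<and> R = [cs $ (k - 1)]) \<or> (even k \<and> R = [r1, r2] \<and> r1 + r2 = cs $ (k - 1) \<and> \<beta> = - (r1 * r2))"
  shows "anp (dcm k cs a \<beta>) k ([a, - a] @ R) = 0\<^sub>m k k"
proof -
  let ?M = "dcm k cs a \<beta>"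
  have AC: "anp ?M k ([a, - a] @ R) \<in> carrier_mat k k" by (rule anp_carrier[OF dcm_carrier])
  show ?thesis
  proof (rule mat_col_eqI)
  fix j assume "j < dim_col (0\<^sub>m k k :: 'a mat)"
  hence j: "j < k" by simp
  let ?x = "unit_vec k j :: 'a vec"
  have x: "?x \<in> carrier_vec k" by simp
  have W: "inW k (anp ?M k R *\<^sub>v ?x)"
  proof (cases "odd k")
    case True thus ?thesis using R tail_odd[OF x True] by auto
  next
    case False
    hence "2 \<le> k" using k by (auto elim: evenE)
    thus ?thesis using R False tail_even[OF x _ _] by auto
  qed
  have "col (anp ?M k ([a, - a] @ R)) j = anp ?M k ([a, - a] @ R) *\<^sub>v ?x"
    by (rule mult_unit_vec_col[symmetric, OF anp_carrier[OF dcm_carrier] j])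
  also have "\<dots> = anp ?M k [a, - a] *\<^sub>v (anp ?M k R *\<^sub>v ?x)"
    unfolding anp_append[OF dcm_carrier]
    by (rule assoc_mult_mat_vec[OF anp_carrier[OF dcm_carrier] anp_carrier[OF dcm_carrier] x])
  also have "\<dots> = 0\<^sub>v k" by (rule anp_pm_W[OF k W])
  finally show "col (anp ?M k ([a, - a] @ R)) j = col (0\<^sub>m k k) j" using j by simp
  qed (insert AC, auto)
qed

lemma Mc_parity:
  fixes cs :: "'a::field vec"
  assumes i: "i < k" and j: "j < k"
    and nz: "(compan k cs - dcm k cs a \<beta>) $$ (i, j) \<noteq> 0"
  shows "even i \<and> odd j"
  using nz i j unfolding compan_def dcm_def dcol_def
  by (auto split: if_splits)

lemma Mc_sq:
  fixes cs :: "'a::field vec"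
  shows "(compan k cs - dcm k cs a \<beta>) * (compan k cs - dcm k cs a \<beta>) = 0\<^sub>m k k"
proof -
  let ?N = "compan k cs - dcm k cs a \<beta>"
  have N: "?N \<in> carrier_mat k k" by (rule minus_carrier_mat, simp)
  show ?thesis
  proof (rule eq_matI)
    fix i j assume "i < dim_row (0\<^sub>m k k :: 'a mat)" "j < dim_col (0\<^sub>m k k :: 'a mat)"
    hence i: "i < k" and j: "j < k" by auto
    have "(?N * ?N) $$ (i, j) = (\<Sum>l\<in>{0..<k}. ?N $$ (i, l) * ?N $$ (l, j))"
      using N i j by (simp add: scalar_prod_def)
    also have "\<dots> = 0"
    proof (rule sum.neutral, intro ballI)
      fix l assume "l \<in> {0..<k}"
      hence l: "l < k" by simp
      show "?N $$ (i, l) * ?N $$ (l, j) = 0"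
        using Mc_parity[OF i l, of cs a \<beta>] Mc_parity[OF l j, of cs a \<beta>] by auto
    qed
    finally show "(?N * ?N) $$ (i, j) = 0\<^sub>m k k $$ (i, j)" using i j by simp
  qed (insert N, auto)
qed

lemma ff_pow_card:
  fixes x :: "'a::{finite,field}"
  shows "x ^ card (UNIV :: 'a set) = x"
proof (cases "x = 0")
  case True
  have "card (UNIV :: 'a set) \<noteq> 0" by simp
  thus ?thesis using True by (simp add: power_0_left)
next
  case False
  let ?N = "UNIV - {0 :: 'a}"
  have fin: "finite ?N" by simp
  have bij: "bij_betw (\<lambda>y. x * y) ?N ?N"
  proof (rule bij_betwI[of _ _ _ "\<lambda>y. y / x"])
    show "(\<lambda>y. x * y) \<in> ?N \<rightarrow> ?N" using False by auto
    show "(\<lambda>y. y / x) \<in> ?N \<rightarrow> ?N" using False by auto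
  qed (insert False, auto)
  have "prod (\<lambda>y. x * y) ?N = prod (\<lambda>y. y) ?N"
    using prod.reindex_bij_betw[OF bij, of "\<lambda>y. y"] by simp
  moreover have "prod (\<lambda>y. x * y) ?N = x ^ card ?N * prod (\<lambda>y. y) ?N"
    by (simp add: prod.distrib)
  moreover have "prod (\<lambda>y. y) ?N \<noteq> 0" using fin by (simp add: prod_zero_iff)
  ultimately have x1: "x ^ card ?N = 1" by simp
  have c1: "card ?N = card (UNIV :: 'a set) - 1" by (simp add: card_Diff_singleton)
  have "card (UNIV :: 'a set) \<ge> 1"
    using card_gt_0_iff[of "UNIV :: 'a set"] by simp
  hence q: "card (UNIV :: 'a set) = Suc (card ?N)" unfolding c1 by simp
  show ?thesis unfolding q using x1 by simp
qed

lemma invol_even: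
  assumes "finite A" "\<And>x. x \<in> A \<Longrightarrow> f x \<in> A" "\<And>x. x \<in> A \<Longrightarrow> f x \<noteq> x" "\<And>x. x \<in> A \<Longrightarrow> f (f x) = x"
  shows "even (card A)"
  using assms
proof (induction "card A" arbitrary: A rule: less_induct)
  case less
  show ?case
  proof (cases "A = {}")
    case True thus ?thesis by simp
  next
    case False
    then obtain x where x: "x \<in> A" by auto
    let ?A' = "A - {x, f x}"
    have fx: "f x \<in> A" "f x \<noteq> x" using less.prems x by auto
    have cA: "card ?A' = card A - 2" using x fx less.prems(1) by (simp add: card_Diff_subset)
    have c2: "card {x, f x} = 2" using fx by simp
    have "{x, f x} \<subseteq> A" using x fx by simp
    hence "card A \<ge> 2" using card_mono[OF less.prems(1)] c2 by metis
    hence lt: "card ?A' < card A" using cA by simp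
    have "even (card ?A')"
    proof (rule less.hyps[OF lt])
      show "finite ?A'" using less.prems(1) by simp
      fix y assume y: "y \<in> ?A'"
      show "f y \<in> ?A'"
      proof -
        have "f y \<in> A" using y less.prems(2) by auto
        moreover have "f y \<noteq> x" using y less.prems(4)[of y] by auto
        moreover have "f y \<noteq> f x"
        proof
          assume "f y = f x"
          hence "f (f y) = f (f x)" by simp
          hence "y = x" using y less.prems(4)[of y] less.prems(4)[of x] x by simp
          thus False using y by simp
        qed
        ultimately show ?thesis by auto
      qed
      show "f y \<noteq> y" using y less.prems(3) by auto
      show "f (f y) = y" using y less.prems(4) by auto
    qed
    moreover have "card A = card ?A' + 2" using cA \<open>card A \<ge> 2\<close> by simp
    ultimately show ?thesis by simp
  qed
qed

lemma ff_two_ne_zero: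
  assumes "odd (card (UNIV :: 'a::{finite,field} set))"
  shows "(2::'a) \<noteq> 0"
proof
  assume two: "(2::'a) = 0"
  have "even (card (UNIV :: 'a set))"
  proof (rule invol_even[of _ "\<lambda>x. x + 1"])
    fix x :: 'a
    show "x + 1 \<noteq> x" by simp
    have "x + 1 + 1 = x + 2" by simp
    thus "x + 1 + 1 = x" using two by simp
  qed auto
  thus False using assms by simp
qed

lemma ff_choose:
  assumes "card (UNIV :: 'a::{finite,field} set) \<ge> 5"
  shows "\<exists>a::'a. a \<noteq> 0 \<and> a \<noteq> t \<and> a \<noteq> - t"
proof -
  have "card {0, t, - t} \<le> 3" by (auto simp: card_insert_if)
  hence "{0, t, - t} \<noteq> (UNIV :: 'a set)" using assms by auto
  thus ?thesis by auto
qed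


lemma compan_carrier[simp]: "compan k cs \<in> carrier_mat k k" unfolding compan_def by simp

lemma compan_split:
  fixes cs :: "'a::{finite,field} vec"
  assumes two: "(2::'a) \<noteq> 0" and q5: "card (UNIV :: 'a set) \<ge> 5" and k: "1 \<le> k"
  shows "\<exists>Dc Mc S. Dc \<in> carrier_mat k k \<and> Mc \<in> carrier_mat k k \<and> compan k cs = Dc + Mc \<and>
    Mc * Mc = 0\<^sub>m k k \<and> distinct S \<and> anp Dc k S = 0\<^sub>m k k"
proof -
  define \<tau> where "\<tau> = cs $ (k - 1)"
  define t where "t = (if odd k then \<tau> else if \<tau> \<noteq> 0 then \<tau> else 1)"
  obtain a :: 'a where a: "a \<noteq> 0" "a \<noteq> t" "a \<noteq> - t" using ff_choose[OF q5] by blast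
  have ana: "a \<noteq> - a"
  proof
    assume "a = - a"
    hence "2 * a = 0" by (metis add.inverse_neutral add_eq_0_iff2 mult_2)
    thus False using two a(1) by simp
  qed
  have one: "(1::'a) \<noteq> - 1"
  proof
    assume "(1::'a) = - 1"
    hence "(2::'a) = 0" by (metis add_eq_0_iff2 one_add_one)
    thus False using two by simp
  qed
  define R where "R = (if odd k then [\<tau>] else if \<tau> \<noteq> 0 then [0, \<tau>] else [1, - 1 :: 'a])"
  define \<beta> where "\<beta> = (if odd k then 0 else if \<tau> \<noteq> 0 then 0 else (1::'a))"
  have Rc: "(odd k \<and> R = [cs $ (k - 1)]) \<or>
      (even k \<and> R = [hd R, hd (tl R)] \<and> hd R + hd (tl R) = cs $ (k - 1) \<and> \<beta> = - (hd R * hd (tl R)))"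
    unfolding R_def \<beta>_def \<tau>_def by auto
  define Dc where "Dc = dcm k cs a \<beta>"
  define Mc where "Mc = compan k cs - Dc"
  have Dc: "Dc \<in> carrier_mat k k" unfolding Dc_def by simp
  have Mc: "Mc \<in> carrier_mat k k" unfolding Mc_def by (rule minus_carrier_mat, simp add: Dc_def)
  have sum: "compan k cs = Dc + Mc" unfolding Mc_def Dc_def
    by (intro eq_matI, auto simp: compan_def dcm_def)
  have sq: "Mc * Mc = 0\<^sub>m k k" unfolding Mc_def Dc_def by (rule Mc_sq)
  have an: "anp Dc k ([a, - a] @ R) = 0\<^sub>m k k" unfolding Dc_def by (rule anp_dcm_zero[OF k Rc])
  have dist: "distinct ([a, - a] @ R)"
    using a ana one unfolding R_def t_def by (auto split: if_splits simp: minus_equation_iff)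
  show ?thesis using Dc Mc sum sq an dist by blast
qed

lemma zero_mat_mult_vec:
  fixes u :: "'a::field vec"
  assumes u: "u \<in> carrier_vec k"
  shows "0\<^sub>m k k *\<^sub>v u = 0\<^sub>v k"
  using u by (intro eq_vecI, auto)

lemma block_split:
  fixes cs :: "'a::{finite,field} vec"
  assumes two: "(2::'a) \<noteq> 0" and q5: "card (UNIV :: 'a set) \<ge> 5" and k: "1 \<le> k"
    and B: "B = compan k cs \<or> B = transpose_mat (compan k cs)"
  shows "\<exists>Db Mb. Db \<in> carrier_mat k k \<and> Mb \<in> carrier_mat k k \<and> B = Db + Mb \<and> Mb * Mb = 0\<^sub>m k k \<and>
    (\<forall>u \<in> carrier_vec k. u \<in> eig_span Db (1\<^sub>m k) UNIV k)"
proof -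
  obtain Dc Mc S where Dc: "Dc \<in> carrier_mat k k" and Mc: "Mc \<in> carrier_mat k k"
    and sum: "compan k cs = Dc + Mc" and sq: "Mc * Mc = 0\<^sub>m k k" and dist: "distinct S"
    and an: "anp Dc k S = 0\<^sub>m k k"
    using compan_split[OF two q5 k, of cs] by blast
  show ?thesis
  proof (cases "B = compan k cs")
    case True
    have "\<forall>u \<in> carrier_vec k. u \<in> eig_span Dc (1\<^sub>m k) UNIV k"
    proof
      fix u :: "'a vec" assume u: "u \<in> carrier_vec k"
      have "u \<in> eig_span Dc (1\<^sub>m k) (set S) k"
        by (rule anp_span[OF Dc dist u], unfold an, rule zero_mat_mult_vec[OF u])
      thus "u \<in> eig_span Dc (1\<^sub>m k) UNIV k" by (rule eig_span_mono, simp)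
    qed
    thus ?thesis using Dc Mc sum sq True by blast
  next
    case False
    hence BT: "B = transpose_mat (compan k cs)" using B by simp
    have DcT: "transpose_mat Dc \<in> carrier_mat k k" using Dc by simp
    have McT: "transpose_mat Mc \<in> carrier_mat k k" using Mc by simp
    have sumT: "B = transpose_mat Dc + transpose_mat Mc" unfolding BT sum using transpose_add[OF Dc Mc] by simp
    have sqT: "transpose_mat Mc * transpose_mat Mc = 0\<^sub>m k k"
      using transpose_mult[OF Mc Mc] sq by (simp add: zero_transpose_mat)
    have anT: "anp (transpose_mat Dc) k S = 0\<^sub>m k k" unfolding anp_transpose[OF Dc] an by simp
    have "\<forall>u \<in> carrier_vec k. u \<in> eig_span (transpose_mat Dc) (1\<^sub>m k) UNIV k"
    proof
      fix u :: "'a vec" assume u: "u \<in> carrier_vec k"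
      have "u \<in> eig_span (transpose_mat Dc) (1\<^sub>m k) (set S) k"
        by (rule anp_span[OF DcT dist u], unfold anT, rule zero_mat_mult_vec[OF u])
      thus "u \<in> eig_span (transpose_mat Dc) (1\<^sub>m k) UNIV k" by (rule eig_span_mono, simp)
    qed
    thus ?thesis using DcT McT sumT sqT by blast
  qed
qed

lemma eig_span_map:
  fixes K :: "'a::field mat"
  assumes K: "K \<in> carrier_mat n k" and u: "u \<in> eig_span Db Ek L k"
    and hD: "\<And>w c. w \<in> carrier_vec k \<Longrightarrow> Db *\<^sub>v w = c \<cdot>\<^sub>v w \<Longrightarrow> D *\<^sub>v (K *\<^sub>v w) = c \<cdot>\<^sub>v (K *\<^sub>v w)"
    and hE: "\<And>w. w \<in> carrier_vec k \<Longrightarrow> E *\<^sub>v (K *\<^sub>v w) = K *\<^sub>v w"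
  shows "K *\<^sub>v u \<in> eig_span D E L n"
  using u
proof (induction rule: eig_span.induct)
  case es_zero
  show ?case using mult_mat_vec_0[OF K] by (simp add: eig_span.intros)
next
  case (es_add y w c)
  have yc: "y \<in> carrier_vec k" using eig_span_carrier[OF es_add.hyps(1)] .
  have "K *\<^sub>v (w + y) = K *\<^sub>v w + K *\<^sub>v y" by (rule mult_add_distrib_mat_vec[OF K es_add.hyps(2) yc])
  moreover have "K *\<^sub>v w + K *\<^sub>v y \<in> eig_span D E L n"
    by (rule eig_span.intros(2)[OF es_add.IH _ hE[OF es_add.hyps(2)] es_add.hyps(4) hD[OF es_add.hyps(2,5)]],
        insert K es_add.hyps(2), simp)
  ultimately show ?case by simp
qed

lemma eig_span_transfer:
  assumes x: "x \<in> eig_span D2 E2 L n"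
    and h: "\<And>w c. w \<in> carrier_vec n \<Longrightarrow> E2 *\<^sub>v w = w \<Longrightarrow> D2 *\<^sub>v w = c \<cdot>\<^sub>v w \<Longrightarrow> E *\<^sub>v w = w \<and> D *\<^sub>v w = c \<cdot>\<^sub>v w"
  shows "x \<in> eig_span D E L n"
  using x
proof (induction rule: eig_span.induct)
  case es_zero show ?case by (rule eig_span.intros)
next
  case (es_add y w c)
  show ?case using h[OF es_add.hyps(2,3,5)] es_add by (auto intro: eig_span.intros)
qed

lemma get_frame:
  fixes A E :: "'a::{finite,field} mat"
  assumes A: "A \<in> carrier_mat n n" and E: "E \<in> carrier_mat n n" and EE: "E * E = E"
    and EA: "E * A = A * E" and x0: "x0 \<in> carrier_vec n" and nz: "E *\<^sub>v x0 \<noteq> 0\<^sub>v n"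
  shows "\<exists>k K G B. 1 \<le> k \<and> K \<in> carrier_mat n k \<and> G \<in> carrier_mat k n \<and> B \<in> carrier_mat k k \<and>
    G * K = 1\<^sub>m k \<and> A * K = K * B \<and> G * A = B * G \<and> E * K = K \<and> G * E = G \<and>
    (\<exists>cs. B = compan k cs \<or> B = transpose_mat (compan k cs))"
proof -
  define v0 where "v0 = E *\<^sub>v x0"
  have v0: "v0 \<in> carrier_vec n" unfolding v0_def using E x0 by simp
  have Ev0: "E *\<^sub>v v0 = v0" unfolding v0_def using assoc_mult_mat_vec[OF E E x0] EE by simp
  define VS where "VS = {w \<in> carrier_vec n. E *\<^sub>v w = w}"
  define FS where "FS = {f \<in> carrier_vec n. transpose_mat E *\<^sub>v f = f}"
  define KS where "KS = kdim n A ` VS \<union> kdim n (transpose_mat A) ` FS"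
  have finKS: "finite KS" unfolding KS_def VS_def FS_def
    using finite_carrier_vec[of n, where 'a = 'a] by auto
  have v0VS: "v0 \<in> VS" unfolding VS_def using v0 Ev0 by simp
  hence neKS: "KS \<noteq> {}" unfolding KS_def by auto
  define km where "km = Max KS"
  have kmin: "km \<in> KS" unfolding km_def by (rule Max_in[OF finKS neKS])
  have kmge: "\<And>j. j \<in> KS \<Longrightarrow> j \<le> km" unfolding km_def by (rule Max_ge[OF finKS])
  have "1 \<le> kdim n A v0" by (rule kdim_pos[OF A v0], unfold v0_def, rule nz)
  moreover have "kdim n A v0 \<le> km" using kmge v0VS unfolding KS_def by auto
  ultimately have km1: "1 \<le> km" by simp
  have AT: "transpose_mat A \<in> carrier_mat n n" using A by simp
  have ET: "transpose_mat E \<in> carrier_mat n n" using E by simp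
  show ?thesis
  proof (cases "km \<in> kdim n A ` VS")
    case True
    then obtain v where v: "v \<in> VS" "km = kdim n A v" by auto
    have kmax: "kdim n (transpose_mat A) f \<le> km" if "f \<in> carrier_vec n" "transpose_mat E *\<^sub>v f = f" for f
      using kmge that unfolding KS_def FS_def by auto
    from step_frame[OF A E EE EA _ _ v(2) km1 kmax] v(1)
    obtain K G cs where "K \<in> carrier_mat n km" "G \<in> carrier_mat km n" "cs \<in> carrier_vec km"
      "G * K = 1\<^sub>m km" "A * K = K * compan km cs" "G * A = compan km cs * G" "E * K = K" "G * E = G"
      unfolding VS_def by blast
    thus ?thesis using km1 by (intro exI[of _ km] exI[of _ K] exI[of _ G] exI[of _ "compan km cs"], auto)
  next
    case False
    hence "km \<in> kdim n (transpose_mat A) ` FS" using kmin unfolding KS_def by auto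
    then obtain f where f: "f \<in> FS" "km = kdim n (transpose_mat A) f" by auto
    have kmax: "kdim n (transpose_mat (transpose_mat A)) w \<le> km"
      if "w \<in> carrier_vec n" "transpose_mat (transpose_mat E) *\<^sub>v w = w" for w
      using kmge that unfolding KS_def VS_def by auto
    from step_frame[OF AT ET transpose_idem[OF E EE] transpose_comm[OF A E EA] _ _ f(2) km1 kmax] f(1)
    obtain K' G' cs where K': "K' \<in> carrier_mat n km" and G': "G' \<in> carrier_mat km n"
      and r: "G' * K' = 1\<^sub>m km" "transpose_mat A * K' = K' * compan km cs"
      "G' * transpose_mat A = compan km cs * G'" "transpose_mat E * K' = K'" "G' * transpose_mat E = G'"
      unfolding FS_def by blast
    define C where "C = compan km cs"
    have C: "C \<in> carrier_mat km km" unfolding C_def by simp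
    define K where "K = transpose_mat G'"
    define G where "G = transpose_mat K'"
    have K: "K \<in> carrier_mat n km" unfolding K_def using G' by simp
    have G: "G \<in> carrier_mat km n" unfolding G_def using K' by simp
    have GK: "G * K = 1\<^sub>m km" unfolding G_def K_def using transpose_mult[OF G' K'] r(1) by simp
    have AK: "A * K = K * transpose_mat C"
    proof -
      have "transpose_mat (G' * transpose_mat A) = A * K" unfolding K_def using transpose_mult[OF G' AT] by simp
      moreover have "transpose_mat (C * G') = K * transpose_mat C" unfolding K_def using transpose_mult[OF C G'] by simp
      ultimately show ?thesis using r(3) unfolding C_def by simp
    qed
    have GA: "G * A = transpose_mat C * G"
    proof -
      have "transpose_mat (transpose_mat A * K') = G * A" unfolding G_def using transpose_mult[OF AT K'] by simp
      moreover have "transpose_mat (K' * C) = transpose_mat C * G" unfolding G_def using transpose_mult[OF K' C] by simp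
      ultimately show ?thesis using r(2) unfolding C_def by simp
    qed
    have EK: "E * K = K"
    proof -
      have "transpose_mat (G' * transpose_mat E) = E * K" unfolding K_def using transpose_mult[OF G' ET] by simp
      thus ?thesis using r(5) unfolding K_def by simp
    qed
    have GE: "G * E = G"
    proof -
      have "transpose_mat (transpose_mat E * K') = G * E" unfolding G_def using transpose_mult[OF ET K'] by simp
      thus ?thesis using r(4) unfolding G_def by simp
    qed
    show ?thesis using km1 K G C GK AK GA EK GE unfolding C_def
      by (intro exI[of _ km] exI[of _ K] exI[of _ G] exI[of _ "transpose_mat (compan km cs)"], auto)
  qed
qed


lemma zero_mat_mult_vec':
  fixes u :: "'a::field vec"
  assumes u: "u \<in> carrier_vec nc"
  shows "0\<^sub>m nr nc *\<^sub>v u = 0\<^sub>v nr"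
  using u by (intro eq_vecI, auto)

lemma main_ind:
  fixes A :: "'a::{finite,field} mat"
  assumes two: "(2::'a) \<noteq> 0" and q5: "card (UNIV :: 'a set) \<ge> 5" and A: "A \<in> carrier_mat n n"
  shows "E \<in> carrier_mat n n \<Longrightarrow> E * E = E \<Longrightarrow> E * A = A * E \<Longrightarrow>
    \<exists>D M. D \<in> carrier_mat n n \<and> M \<in> carrier_mat n n \<and> E * A = D + M \<and> M * M = 0\<^sub>m n n \<and>
      E * D = D \<and> D * E = D \<and> E * M = M \<and> M * E = M \<and>
      (\<forall>x \<in> carrier_vec n. E *\<^sub>v x = x \<longrightarrow> x \<in> eig_span D E UNIV n)"
proof (induction "card ((\<lambda>x. E *\<^sub>v x) ` carrier_vec n)" arbitrary: E rule: less_induct)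
  case less
  have E: "E \<in> carrier_mat n n" and EE: "E * E = E" and EA: "E * A = A * E" using less.prems by auto
  show ?case
  proof (cases "\<forall>x \<in> carrier_vec n. E *\<^sub>v x = 0\<^sub>v n")
    case True
    have E0: "E = 0\<^sub>m n n"
    proof (rule mat_col_eqI)
      fix j assume "j < dim_col (0\<^sub>m n n :: 'a mat)"
      hence j: "j < n" by simp
      have "col E j = E *\<^sub>v unit_vec n j" using mult_unit_vec_col[OF E j] by simp
      also have "\<dots> = 0\<^sub>v n" using True by simp
      finally show "col E j = col (0\<^sub>m n n) j" using j by simp
    qed (insert E, auto)
    let ?Z = "0\<^sub>m n n :: 'a mat"
    have "E * A = ?Z + ?Z" unfolding E0 using A by simp
    moreover have "\<forall>x \<in> carrier_vec n. E *\<^sub>v x = x \<longrightarrow> x \<in> eig_span ?Z E UNIV n"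
    proof (intro ballI impI)
      fix x :: "'a vec" assume x: "x \<in> carrier_vec n" and "E *\<^sub>v x = x"
      hence "x = 0\<^sub>v n" using True by simp
      thus "x \<in> eig_span ?Z E UNIV n" by (simp add: eig_span.intros)
    qed
    ultimately show ?thesis unfolding E0 by (intro exI[of _ ?Z], auto)
  next
    case False
    then obtain x0 where x0: "x0 \<in> carrier_vec n" "E *\<^sub>v x0 \<noteq> 0\<^sub>v n" by auto
    obtain k K G B where k1: "1 \<le> k" and K: "K \<in> carrier_mat n k" and G: "G \<in> carrier_mat k n"
      and B: "B \<in> carrier_mat k k" and GK: "G * K = 1\<^sub>m k" and AK: "A * K = K * B" and GA: "G * A = B * G"
      and EK: "E * K = K" and GE: "G * E = G" and Bc: "\<exists>cs. B = compan k cs \<or> B = transpose_mat (compan k cs)"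
      using get_frame[OF A E EE EA x0] by blast
    from Bc obtain cs where Bc: "B = compan k cs \<or> B = transpose_mat (compan k cs)" by blast
    obtain Db Mb where Db: "Db \<in> carrier_mat k k" and Mb: "Mb \<in> carrier_mat k k" and BDM: "B = Db + Mb"
      and Mb2: "Mb * Mb = 0\<^sub>m k k" and spDb: "\<forall>u \<in> carrier_vec k. u \<in> eig_span Db (1\<^sub>m k) UNIV k"
      using block_split[OF two q5 k1 Bc] by blast
    define P where "P = K * G"
    define E' where "E' = E - P"
    define D1 where "D1 = K * Db * G"
    define M1 where "M1 = K * Mb * G"
    have P: "P \<in> carrier_mat n n" unfolding P_def using K G by simp
    have E': "E' \<in> carrier_mat n n" unfolding E'_def by (rule minus_carrier_mat[OF P])
    have D1: "D1 \<in> carrier_mat n n" unfolding D1_def using K G Db by simp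
    have M1: "M1 \<in> carrier_mat n n" unfolding M1_def using K G Mb by simp
    have EP: "E * P = P" unfolding P_def using assoc_mult_mat[OF E K G] EK by simp
    have PE: "P * E = P" unfolding P_def using assoc_mult_mat[OF K G E] GE by simp
    have PP: "P * P = P" unfolding P_def
      using assoc_mult_mat[OF K G mult_carrier_mat[OF K G]] assoc_mult_mat[OF G K G] GK G by simp
    have PA: "P * A = A * P"
    proof -
      have "P * A = K * (B * G)" unfolding P_def using assoc_mult_mat[OF K G A] GA by simp
      also have "\<dots> = (A * K) * G" using assoc_mult_mat[OF K B G] AK by simp
      also have "\<dots> = A * P" unfolding P_def using assoc_mult_mat[OF A K G] by simp
      finally show ?thesis .
    qed
    have GE': "G * E' = 0\<^sub>m k n"
    proof -
      have "G * E' = G * E - G * P" unfolding E'_def by (rule mult_minus_distrib_mat[OF G E P])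
      also have "G * P = G" unfolding P_def using assoc_mult_mat[OF G K G] GK G by simp
      finally show ?thesis using GE G by (intro eq_matI, auto)
    qed
    have E'K: "E' * K = 0\<^sub>m n k"
    proof -
      have "E' * K = E * K - P * K" unfolding E'_def by (rule minus_mult_distrib_mat[OF E P K])
      also have "P * K = K" unfolding P_def using assoc_mult_mat[OF K G K] GK K by simp
      finally show ?thesis using EK K by (intro eq_matI, auto)
    qed
    have EE': "E * E' = E'"
    proof -
      have "E * E' = E * E - E * P" unfolding E'_def by (rule mult_minus_distrib_mat[OF E E P])
      thus ?thesis unfolding EE EP E'_def .
    qed
    have E'E: "E' * E = E'"
    proof -
      have "E' * E = E * E - P * E" unfolding E'_def by (rule minus_mult_distrib_mat[OF E P E])
      thus ?thesis unfolding EE PE E'_def .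
    qed
    have E'E': "E' * E' = E'"
    proof -
      have h: "(E - P) * E' = E * E' - P * E'" by (rule minus_mult_distrib_mat[OF E P E'])
      hence "E' * E' = E * E' - P * E'" by (simp only: E'_def[symmetric])
      also have "P * E' = 0\<^sub>m n n" unfolding P_def using assoc_mult_mat[OF K G E'] GE' K by simp
      finally show ?thesis unfolding EE' using E' by (intro eq_matI, auto)
    qed
    have E'A: "E' * A = A * E'"
    proof -
      have "E' * A = E * A - P * A" unfolding E'_def by (rule minus_mult_distrib_mat[OF E P A])
      also have "A * E' = A * E - A * P" unfolding E'_def by (rule mult_minus_distrib_mat[OF A E P])
      ultimately show ?thesis unfolding EA PA by simp
    qed
    have finE: "finite ((\<lambda>x. E *\<^sub>v x) ` carrier_vec n)" using finite_carrier_vec by auto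
    have lt: "card ((\<lambda>x. E' *\<^sub>v x) ` carrier_vec n) < card ((\<lambda>x. E *\<^sub>v x) ` carrier_vec n)"
    proof (rule psubset_card_mono[OF finE])
      have sub: "(\<lambda>x. E' *\<^sub>v x) ` carrier_vec n \<subseteq> (\<lambda>x. E *\<^sub>v x) ` carrier_vec n"
      proof
        fix y assume "y \<in> (\<lambda>x. E' *\<^sub>v x) ` carrier_vec n"
        then obtain x where x: "x \<in> carrier_vec n" "y = E' *\<^sub>v x" by auto
        have "y = (E * E') *\<^sub>v x" unfolding EE' x(2) ..
        also have "\<dots> = E *\<^sub>v (E' *\<^sub>v x)" by (rule assoc_mult_mat_vec[OF E E' x(1)])
        finally show "y \<in> (\<lambda>x. E *\<^sub>v x) ` carrier_vec n" using E' x(1) by auto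
      qed
      define y where "y = K *\<^sub>v unit_vec k 0"
      have yc: "y \<in> carrier_vec n" unfolding y_def using K by simp
      have y0: "y \<noteq> 0\<^sub>v n"
      proof
        assume "y = 0\<^sub>v n"
        hence "G *\<^sub>v y = 0\<^sub>v k" using mult_mat_vec_0[OF G] by simp
        moreover have "G *\<^sub>v y = unit_vec k 0" unfolding y_def
          using assoc_mult_mat_vec[OF G K, of "unit_vec k 0"] GK by simp
        ultimately have "unit_vec k 0 $ 0 = (0\<^sub>v k :: 'a vec) $ 0" by simp
        thus False using k1 by simp
      qed
      have Ey: "E *\<^sub>v y = y" unfolding y_def using assoc_mult_mat_vec[OF E K, of "unit_vec k 0"] EK by simp
      have Py: "P *\<^sub>v y = y" unfolding y_def P_def
        using assoc_mult_mat_vec[OF mult_carrier_mat[OF K G] K, of "unit_vec k 0"]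
          assoc_mult_mat[OF K G K] GK K by simp
      have "y \<notin> (\<lambda>x. E' *\<^sub>v x) ` carrier_vec n"
      proof
        assume "y \<in> (\<lambda>x. E' *\<^sub>v x) ` carrier_vec n"
        then obtain x where x: "x \<in> carrier_vec n" "y = E' *\<^sub>v x" by auto
        have "P *\<^sub>v y = (P * E') *\<^sub>v x" unfolding x(2) by (rule assoc_mult_mat_vec[OF P E' x(1), symmetric])
        also have "P * E' = 0\<^sub>m n n" unfolding P_def using assoc_mult_mat[OF K G E'] GE' K by simp
        finally have "P *\<^sub>v y = 0\<^sub>v n" using zero_mat_mult_vec'[OF x(1)] by simp
        thus False using Py y0 by simp
      qed
      moreover have "y \<in> (\<lambda>x. E *\<^sub>v x) ` carrier_vec n" using Ey yc by (metis image_eqI)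
      ultimately show "(\<lambda>x. E' *\<^sub>v x) ` carrier_vec n \<subset> (\<lambda>x. E *\<^sub>v x) ` carrier_vec n" using sub by blast
    qed
    obtain D2 M2 where D2: "D2 \<in> carrier_mat n n" and M2: "M2 \<in> carrier_mat n n"
      and IH1: "E' * A = D2 + M2" and IH2: "M2 * M2 = 0\<^sub>m n n"
      and IH3: "E' * D2 = D2" "D2 * E' = D2" "E' * M2 = M2" "M2 * E' = M2"
      and IH4: "\<forall>x \<in> carrier_vec n. E' *\<^sub>v x = x \<longrightarrow> x \<in> eig_span D2 E' UNIV n"
      using less.hyps[OF lt E' E'E' E'A] by blast
    have KXG: "K * X * G \<in> carrier_mat n n" if "X \<in> carrier_mat k k" for X using K G that by simp
    have GKXG: "G * (K * X * G) = X * G" if X: "X \<in> carrier_mat k k" for X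
    proof -
      have "G * (K * X * G) = G * (K * X) * G" using assoc_mult_mat[OF G mult_carrier_mat[OF K X] G] by simp
      also have "G * (K * X) = X" using assoc_mult_mat[OF G K X] GK X by simp
      finally show ?thesis .
    qed
    have KXGK: "K * X * G * K = K * X" if X: "X \<in> carrier_mat k k" for X
      using assoc_mult_mat[OF mult_carrier_mat[OF K X] G K] GK K X by simp
    have KXGE': "K * X * G * E' = 0\<^sub>m n n" if X: "X \<in> carrier_mat k k" for X
      using assoc_mult_mat[OF mult_carrier_mat[OF K X] G E'] GE' K X by simp
    have EKXG: "E * (K * X * G) = K * X * G" if X: "X \<in> carrier_mat k k" for X
      using assoc_mult_mat[OF E mult_carrier_mat[OF K X] G] assoc_mult_mat[OF E K X] EK by simp
    have KXGE: "K * X * G * E = K * X * G" if X: "X \<in> carrier_mat k k" for X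
      using assoc_mult_mat[OF mult_carrier_mat[OF K X] G E] GE by simp
    have GZ: "G * Z = 0\<^sub>m k n" if Z: "Z \<in> carrier_mat n n" "E' * Z = Z" for Z
    proof -
      have "G * Z = (G * E') * Z" using assoc_mult_mat[OF G E' Z(1)] Z(2) by simp
      thus ?thesis using GE' Z(1) by simp
    qed
    have ZK: "Z * K = 0\<^sub>m n k" if Z: "Z \<in> carrier_mat n n" "Z * E' = Z" for Z
    proof -
      have "Z * K = Z * (E' * K)" using assoc_mult_mat[OF Z(1) E' K] Z(2) by simp
      thus ?thesis using E'K Z(1) by simp
    qed
    have EZ: "E * Z = Z" if Z: "Z \<in> carrier_mat n n" "E' * Z = Z" for Z
    proof -
      have "E * Z = (E * E') * Z" using assoc_mult_mat[OF E E' Z(1)] Z(2) by simp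
      thus ?thesis using EE' Z(2) by simp
    qed
    have ZE: "Z * E = Z" if Z: "Z \<in> carrier_mat n n" "Z * E' = Z" for Z
    proof -
      have "Z * E = Z * (E' * E)" using assoc_mult_mat[OF Z(1) E' E] Z(2) by simp
      thus ?thesis using E'E Z(2) by simp
    qed
    define D where "D = D1 + D2"
    define M where "M = M1 + M2"
    have D: "D \<in> carrier_mat n n" unfolding D_def using D1 D2 by simp
    have M: "M \<in> carrier_mat n n" unfolding M_def using M1 M2 by simp
    have PAeq: "P * A = D1 + M1"
    proof -
      have "P * A = K * (B * G)" unfolding P_def using assoc_mult_mat[OF K G A] GA by simp
      also have "B * G = Db * G + Mb * G" unfolding BDM by (rule add_mult_distrib_mat[OF Db Mb G])
      also have "K * (Db * G + Mb * G) = K * (Db * G) + K * (Mb * G)"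
        by (rule mult_add_distrib_mat[OF K], insert Db Mb G, auto)
      also have "K * (Db * G) = D1" unfolding D1_def using assoc_mult_mat[OF K Db G] by simp
      also have "K * (Mb * G) = M1" unfolding M1_def using assoc_mult_mat[OF K Mb G] by simp
      finally show ?thesis .
    qed
    have Esplit: "E = P + E'" unfolding E'_def using E P by (intro eq_matI, auto)
    have "E * A = P * A + E' * A" by (subst Esplit, rule add_mult_distrib_mat[OF P E' A])
    hence EAeq: "E * A = D + M" unfolding PAeq IH1 D_def M_def using D1 D2 M1 M2
      by (intro eq_matI, auto)
    have M1M1: "M1 * M1 = 0\<^sub>m n n"
    proof -
      have "M1 * M1 = K * Mb * (G * M1)" unfolding M1_def
        using assoc_mult_mat[OF mult_carrier_mat[OF K Mb] G KXG[OF Mb]] by simp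
      also have "G * M1 = Mb * G" unfolding M1_def by (rule GKXG[OF Mb])
      also have "K * Mb * (Mb * G) = K * (Mb * Mb) * G"
        using assoc_mult_mat[OF mult_carrier_mat[OF K Mb] Mb G] assoc_mult_mat[OF K Mb Mb] by simp
      finally show ?thesis unfolding Mb2 using K G by simp
    qed
    have M1M2: "M1 * M2 = 0\<^sub>m n n"
    proof -
      have "M1 * M2 = K * Mb * (G * M2)" unfolding M1_def
        using assoc_mult_mat[OF mult_carrier_mat[OF K Mb] G M2] by simp
      thus ?thesis using GZ[OF M2 IH3(3)] K Mb by simp
    qed
    have M2M1: "M2 * M1 = 0\<^sub>m n n"
    proof -
      have "M2 * M1 = M2 * K * Mb * G" unfolding M1_def
        using assoc_mult_mat[OF M2 mult_carrier_mat[OF K Mb] G] assoc_mult_mat[OF M2 K Mb] by simp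
      thus ?thesis using ZK[OF M2 IH3(4)] Mb G by simp
    qed
    have MM: "M * M = 0\<^sub>m n n"
    proof -
      have h: "(M1 + M2) * M = M1 * M + M2 * M" by (rule add_mult_distrib_mat[OF M1 M2 M])
      hence "M * M = M1 * M + M2 * M" by (simp only: M_def[symmetric])
      also have "M1 * M = M1 * M1 + M1 * M2" unfolding M_def by (rule mult_add_distrib_mat[OF M1 M1 M2])
      also have "M2 * M = M2 * M1 + M2 * M2" unfolding M_def by (rule mult_add_distrib_mat[OF M2 M1 M2])
      finally show ?thesis unfolding M1M1 M1M2 M2M1 IH2 by simp
    qed
    have ED: "E * D = D" unfolding D_def
      using mult_add_distrib_mat[OF E D1 D2] EKXG[OF Db] EZ[OF D2 IH3(1)] unfolding D1_def by simp
    have DE: "D * E = D" unfolding D_def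
      using add_mult_distrib_mat[OF D1 D2 E] KXGE[OF Db] ZE[OF D2 IH3(2)] unfolding D1_def by simp
    have EM: "E * M = M" unfolding M_def
      using mult_add_distrib_mat[OF E M1 M2] EKXG[OF Mb] EZ[OF M2 IH3(3)] unfolding M1_def by simp
    have ME: "M * E = M" unfolding M_def
      using add_mult_distrib_mat[OF M1 M2 E] KXGE[OF Mb] ZE[OF M2 IH3(4)] unfolding M1_def by simp
    have span: "\<forall>x \<in> carrier_vec n. E *\<^sub>v x = x \<longrightarrow> x \<in> eig_span D E UNIV n"
    proof (intro ballI impI)
      fix x :: "'a vec" assume x: "x \<in> carrier_vec n" and Ex: "E *\<^sub>v x = x"
      have Gx: "G *\<^sub>v x \<in> carrier_vec k" using G x by simp
      have hD: "D *\<^sub>v (K *\<^sub>v w) = c \<cdot>\<^sub>v (K *\<^sub>v w)" if w: "w \<in> carrier_vec k" "Db *\<^sub>v w = c \<cdot>\<^sub>v w" for w c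
      proof -
        have "D *\<^sub>v (K *\<^sub>v w) = (D * K) *\<^sub>v w" by (rule assoc_mult_mat_vec[OF D K w(1), symmetric])
        also have "D * K = D1 * K + D2 * K" unfolding D_def by (rule add_mult_distrib_mat[OF D1 D2 K])
        also have "D1 * K = K * Db" unfolding D1_def by (rule KXGK[OF Db])
        also have "D2 * K = 0\<^sub>m n k" by (rule ZK[OF D2 IH3(2)])
        also have "K * Db + 0\<^sub>m n k = K * Db" using K Db by simp
        also have "(K * Db) *\<^sub>v w = K *\<^sub>v (c \<cdot>\<^sub>v w)" using assoc_mult_mat_vec[OF K Db w(1)] w(2) by simp
        also have "\<dots> = c \<cdot>\<^sub>v (K *\<^sub>v w)" by (rule mult_mat_vec[OF K w(1)])
        finally show ?thesis .
      qed
      have hE: "E *\<^sub>v (K *\<^sub>v w) = K *\<^sub>v w" if w: "w \<in> carrier_vec k" for w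
        using assoc_mult_mat_vec[OF E K w] EK by simp
      have part1: "K *\<^sub>v (G *\<^sub>v x) \<in> eig_span D E UNIV n"
        by (rule eig_span_map[OF K spDb[rule_format, OF Gx] hD hE])
      have E'x: "E' *\<^sub>v (E' *\<^sub>v x) = E' *\<^sub>v x" using assoc_mult_mat_vec[OF E' E' x] E'E' by simp
      have "E' *\<^sub>v x \<in> eig_span D2 E' UNIV n" using IH4 E'x E' x by simp
      hence part2: "E' *\<^sub>v x \<in> eig_span D E UNIV n"
      proof (rule eig_span_transfer)
        fix w c assume w: "w \<in> carrier_vec n" and E'w: "E' *\<^sub>v w = w" and D2w: "D2 *\<^sub>v w = c \<cdot>\<^sub>v w"
        have Ew: "E *\<^sub>v w = w"
        proof -
          have "E *\<^sub>v w = E *\<^sub>v (E' *\<^sub>v w)" using E'w by simp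
          also have "\<dots> = (E * E') *\<^sub>v w" by (rule assoc_mult_mat_vec[OF E E' w, symmetric])
          also have "\<dots> = w" using EE' E'w by simp
          finally show ?thesis .
        qed
        have "D1 *\<^sub>v w = (D1 * E') *\<^sub>v w" using assoc_mult_mat_vec[OF D1 E' w] E'w by simp
        also have "D1 * E' = 0\<^sub>m n n" unfolding D1_def by (rule KXGE'[OF Db])
        finally have D1w: "D1 *\<^sub>v w = 0\<^sub>v n" using zero_mat_mult_vec'[OF w] by simp
        have "D *\<^sub>v w = D1 *\<^sub>v w + D2 *\<^sub>v w" unfolding D_def by (rule add_mult_distrib_mat_vec[OF D1 D2 w])
        also have "\<dots> = c \<cdot>\<^sub>v w" unfolding D1w D2w using w by simp
        finally show "E *\<^sub>v w = w \<and> D *\<^sub>v w = c \<cdot>\<^sub>v w" using Ew by simp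
      qed
      have "x = E *\<^sub>v x" using Ex by simp
      also have "\<dots> = P *\<^sub>v x + E' *\<^sub>v x" by (subst Esplit, rule add_mult_distrib_mat_vec[OF P E' x])
      also have "P *\<^sub>v x = K *\<^sub>v (G *\<^sub>v x)" unfolding P_def by (rule assoc_mult_mat_vec[OF K G x])
      finally have "x = K *\<^sub>v (G *\<^sub>v x) + E' *\<^sub>v x" .
      thus "x \<in> eig_span D E UNIV n" using eig_span_add[OF part1 part2] by simp
    qed
    show ?thesis using D M EAeq MM ED DE EM ME span by blast
  qed
qed

lemma pow_eigvec:
  fixes D :: "'a::field mat"
  assumes D: "D \<in> carrier_mat n n" and w: "w \<in> carrier_vec n" and Dw: "D *\<^sub>v w = c \<cdot>\<^sub>v w"
  shows "(D ^\<^sub>m j) *\<^sub>v w = c ^ j \<cdot>\<^sub>v w"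
proof (induction j)
  case 0 thus ?case using D w by simp
next
  case (Suc j)
  have "(D ^\<^sub>m Suc j) *\<^sub>v w = (D ^\<^sub>m j) *\<^sub>v (D *\<^sub>v w)"
    using assoc_mult_mat_vec[OF pow_carrier_mat[OF D] D w] by simp
  also have "\<dots> = c \<cdot>\<^sub>v ((D ^\<^sub>m j) *\<^sub>v w)" unfolding Dw by (rule mult_mat_vec[OF pow_carrier_mat[OF D] w])
  also have "\<dots> = c ^ Suc j \<cdot>\<^sub>v w" unfolding Suc using w by (intro eq_vecI, auto)
  finally show ?case .
qed

lemma pow_card_span:
  fixes D :: "'a::{finite,field} mat"
  assumes D: "D \<in> carrier_mat n n" and x: "x \<in> eig_span D E L n"
  shows "(D ^\<^sub>m card (UNIV :: 'a set)) *\<^sub>v x = D *\<^sub>v x"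
  using x
proof (induction rule: eig_span.induct)
  case es_zero
  show ?case using mult_mat_vec_0[OF D] mult_mat_vec_0[OF pow_carrier_mat[OF D]] by simp
next
  case (es_add y w c)
  have yc: "y \<in> carrier_vec n" using eig_span_carrier[OF es_add.hyps(1)] .
  have "(D ^\<^sub>m card (UNIV :: 'a set)) *\<^sub>v (w + y) = (D ^\<^sub>m card (UNIV :: 'a set)) *\<^sub>v w + (D ^\<^sub>m card (UNIV :: 'a set)) *\<^sub>v y"
    by (rule mult_add_distrib_mat_vec[OF pow_carrier_mat[OF D] es_add.hyps(2) yc])
  also have "(D ^\<^sub>m card (UNIV :: 'a set)) *\<^sub>v w = D *\<^sub>v w"
    using pow_eigvec[OF D es_add.hyps(2,5)] es_add.hyps(5) ff_pow_card[of c] by simp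
  also have "D *\<^sub>v w + (D ^\<^sub>m card (UNIV :: 'a set)) *\<^sub>v y = D *\<^sub>v (w + y)"
    unfolding es_add.IH by (rule mult_add_distrib_mat_vec[OF D es_add.hyps(2) yc, symmetric])
  finally show ?case .
qed

theorem theorem2p2:
  fixes A :: "'a :: {finite, field} mat" and n :: nat
  assumes "odd (card (UNIV :: 'a set))" and "card (UNIV :: 'a set) \<ge> 5"
    and "n \<ge> 1" and "A \<in> carrier_mat n n"
  shows "\<exists>D M. D \<in> carrier_mat n n \<and> M \<in> carrier_mat n n \<and> A = D + M \<and>
              diagonalizable_mat n D \<and> M * M = 0\<^sub>m n n \<and>
              D ^\<^sub>m card (UNIV :: 'a set) = D"
proof -
  have two: "(2::'a) \<noteq> 0" by (rule ff_two_ne_zero[OF assms(1)])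
  have A: "A \<in> carrier_mat n n" by fact
  have I: "1\<^sub>m n \<in> carrier_mat n n" by simp
  have II: "1\<^sub>m n * 1\<^sub>m n = (1\<^sub>m n :: 'a mat)" by simp
  have IA: "1\<^sub>m n * A = A * 1\<^sub>m n" using A by simp
  obtain D M where D: "D \<in> carrier_mat n n" and M: "M \<in> carrier_mat n n"
    and eq: "1\<^sub>m n * A = D + M" and MM: "M * M = 0\<^sub>m n n"
    and sp: "\<forall>x \<in> carrier_vec n. 1\<^sub>m n *\<^sub>v x = x \<longrightarrow> x \<in> eig_span D (1\<^sub>m n) UNIV n"
    using main_ind[OF two assms(2) A I II IA] by blast
  have sp': "x \<in> eig_span D (1\<^sub>m n) UNIV n" if "x \<in> carrier_vec n" for x using sp that by simp
  have AD: "A = D + M" using eq A by simp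
  have diag: "diagonalizable_mat n D" by (rule diag_from_span[OF D sp'])
  have pow: "D ^\<^sub>m card (UNIV :: 'a set) = D"
  proof (rule mat_col_eqI)
    fix j assume "j < dim_col D"
    hence j: "j < n" using D by simp
    have "col (D ^\<^sub>m card (UNIV :: 'a set)) j = (D ^\<^sub>m card (UNIV :: 'a set)) *\<^sub>v unit_vec n j"
      by (rule mult_unit_vec_col[OF pow_carrier_mat[OF D] j, symmetric])
    also have "\<dots> = D *\<^sub>v unit_vec n j" by (rule pow_card_span[OF D sp'], simp)
    also have "\<dots> = col D j" by (rule mult_unit_vec_col[OF D j])
    finally show "col (D ^\<^sub>m card (UNIV :: 'a set)) j = col D j" .
  qed (insert D, auto)
  show ?thesis using D M AD diag MM pow by blast
qed

end
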